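(* Let $A$ and $Z$ be $n\times n$ complex matrices with $A$ positive semidefinite and $Z$ positive definite with largest eigenvalue $a$ and smallest eigenvalue $b$. Then $${\rm Sing}(AZ) \prec_w \frac{a+b}{2\sqrt{ab}}\,{\rm Eig}(AZ),$$ i.e. for each $k=1,\dots,n$, the sum of the $k$ largest singular values of $AZ$ is at most $\frac{a+b}{2\sqrt{ab}}$ times the sum of the $k$ largest eigenvalues of $AZ$.
   Context: ${\rm Sing}(X)$ is the sequence of singular values of $X$ in decreasing order counted with multiplicity; ${\rm Eig}(X)$, for $X$ with only real eigenvalues (as is $AZ$ here), is the sequence of its eigenvalues in decreasing order counted with multiplicity. For real sequences $\{a_j\}_{j=1}^n,\{b_j\}_{j=1}^n$ arranged in decreasing order, $\{a_j\}\prec_w\{b_j\}$ means $\sum_{j=1}^k a_j\le\sum_{j=1}^k b_j$ for $k=1,\dots,n$. *)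

theory Defs
  imports "Jordan_Normal_Form.Schur_Decomposition" "HOL-Computational_Algebra.Polynomial"
begin

definition hermitian_mat :: "nat \<Rightarrow> complex mat \<Rightarrow> bool" where
  "hermitian_mat n A \<longleftrightarrow> A \<in> carrier_mat n n \<and> mat_adjoint A = A"

(* positive semidefinite: Hermitian and  v^* A v \<ge> 0  for all v
   (order on complex: real and nonnegative); note (A v) \<bullet>c v = v^* A v *)
definition psd_mat :: "nat \<Rightarrow> complex mat \<Rightarrow> bool" where
  "psd_mat n A \<longleftrightarrow> hermitian_mat n A \<and>
     (\<forall>v \<in> carrier_vec n. 0 \<le> (A *\<^sub>v v) \<bullet>c v)"

definition pd_mat :: "nat \<Rightarrow> complex mat \<Rightarrow> bool" where
  "pd_mat n A \<longleftrightarrow> hermitian_mat n A \<and>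
     (\<forall>v \<in> carrier_vec n. v \<noteq> 0\<^sub>v n \<longrightarrow> 0 < (A *\<^sub>v v) \<bullet>c v)"

(* Only meaningful for X with
   real spectrum (real parts are taken). *)
definition Eig :: "complex mat \<Rightarrow> real list" where
  "Eig X = rev (sorted_list_of_multiset (image_mset Re (proots (char_poly X))))"

definition Sing :: "complex mat \<Rightarrow> real list" where
  "Sing X = map sqrt (Eig (mat_adjoint X * X))"

end

theory Submission
  imports Defs "HOL-Combinatorics.List_Permutation"
begin

lemma adj_dim[simp]: "dim_row (mat_adjoint A) = dim_col A" "dim_col (mat_adjoint A) = dim_row A"
  unfolding mat_adjoint_def by auto

lemma adj_carrier[simp]: "A \<in> carrier_mat n m \<Longrightarrow> mat_adjoint A \<in> carrier_mat m n"
  unfolding carrier_mat_def by simp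

lemma adj_index[simp]: "i < dim_col A \<Longrightarrow> j < dim_row A \<Longrightarrow> mat_adjoint A $$ (i,j) = cnj (A $$ (j,i))"
  unfolding mat_adjoint_def by (simp add: mat_of_rows_index)

lemma adj_adj[simp]: "mat_adjoint (mat_adjoint (A :: complex mat)) = A"
  by (rule eq_matI) simp_all

lemma adj_mult: assumes "A \<in> carrier_mat n m" "B \<in> carrier_mat m k"
  shows "mat_adjoint (A * B :: complex mat) = mat_adjoint B * mat_adjoint A"
proof (rule eq_matI)
  fix i j assume ij: "i < dim_row (mat_adjoint B * mat_adjoint A)" "j < dim_col (mat_adjoint B * mat_adjoint A)"
  hence i: "i < k" and j: "j < n" using assms by auto
  show "mat_adjoint (A * B) $$ (i, j) = (mat_adjoint B * mat_adjoint A) $$ (i, j)"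
    using assms i j by (simp add: scalar_prod_def sum_conjugate row_def col_def ac_simps)
qed (use assms in auto)

lemma adj_one[simp]: "mat_adjoint (1\<^sub>m n :: complex mat) = 1\<^sub>m n"
  by (rule eq_matI) simp_all

lemma adj_zero[simp]: "mat_adjoint (0\<^sub>m n m :: complex mat) = 0\<^sub>m m n"
  by (rule eq_matI) simp_all

lemma adj_add: assumes "A \<in> carrier_mat n m" "B \<in> carrier_mat n m"
  shows "mat_adjoint (A + B :: complex mat) = mat_adjoint A + mat_adjoint B"
  using assms by (intro eq_matI) auto

lemma adj_smult: "mat_adjoint (c \<cdot>\<^sub>m A :: complex mat) = cnj c \<cdot>\<^sub>m mat_adjoint A"
  by (intro eq_matI) auto

lemma cscalar_def: "(v :: complex vec) \<bullet>c w = (\<Sum>i<dim_vec w. v $ i * cnj (w $ i))"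
  unfolding scalar_prod_def by (auto intro!: sum.cong)

lemma adj_cscalar: assumes "A \<in> carrier_mat n m" "v \<in> carrier_vec m" "w \<in> carrier_vec n"
  shows "(A *\<^sub>v v) \<bullet>c (w :: complex vec) = v \<bullet>c (mat_adjoint A *\<^sub>v w)"
proof -
  have "(A *\<^sub>v v) \<bullet>c w = (\<Sum>i<n. (\<Sum>j<m. A $$ (i,j) * v $ j) * cnj (w $ i))"
    using assms by (simp add: cscalar_def scalar_prod_def mult_mat_vec_def row_def atLeast0LessThan)
  also have "\<dots> = (\<Sum>j<m. v $ j * cnj (\<Sum>i<n. cnj (A $$ (i,j)) * w $ i))"
    by (simp add: sum_distrib_left sum_distrib_right sum_conjugate ac_simps sum.swap[of _ "{..<n}"])
  also have "\<dots> = v \<bullet>c (mat_adjoint A *\<^sub>v w)"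
    using assms by (simp add: cscalar_def scalar_prod_def mult_mat_vec_def row_def atLeast0LessThan)
  finally show ?thesis .
qed

lemma row_adj: assumes "(W :: complex mat) \<in> carrier_mat n k" "i < k"
  shows "row (mat_adjoint W) i = conjugate (col W i)"
  using assms carrier_matD[OF assms(1)] by (intro eq_vecI) auto

lemma quad_entry: assumes W: "W \<in> carrier_mat n k" and M: "M \<in> carrier_mat n n" and i: "i < k" and j: "j < k"
  shows "(mat_adjoint W * M * W :: complex mat) $$ (i,j) = (M *\<^sub>v col W j) \<bullet>c col W i"
proof -
  have "mat_adjoint W * M * W = mat_adjoint W * (M * W)"
    using W M by (intro assoc_mult_mat[of _ k n _ n _ k]) auto
  hence "(mat_adjoint W * M * W) $$ (i,j) = row (mat_adjoint W) i \<bullet> col (M * W) j"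
    using W M i j by simp
  also have "\<dots> = conjugate (col W i) \<bullet> (M *\<^sub>v col W j)"
    by (simp only: row_adj[OF W i] col_mult2[OF M W j])
  also have "\<dots> = (M *\<^sub>v col W j) \<bullet>c col W i"
    by (rule conjugate_vec_sprod_comm[symmetric, of _ n], insert W M j, auto)
  finally show ?thesis .
qed

lemma gram_entry: assumes W: "W \<in> carrier_mat n k" and i: "i < k" and j: "j < k"
  shows "(mat_adjoint W * W :: complex mat) $$ (i,j) = col W j \<bullet>c col W i"
  using quad_entry[OF W one_carrier_mat i j] W j by (simp add: one_mult_mat_vec[of _ n])


lemma cscalar_smult: assumes "v \<in> carrier_vec n" "w \<in> carrier_vec n"
  shows "(c \<cdot>\<^sub>v v) \<bullet>c (d \<cdot>\<^sub>v (w :: complex vec)) = c * cnj d * (v \<bullet>c w)"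
  using assms by (simp add: cscalar_def sum_distrib_left ac_simps)

lemma cscalar_self_real: "(v :: complex vec) \<bullet>c v = of_real (Re (v \<bullet>c v))"
  using conjugate_square_ge_0_vec[of v] by (simp add: less_eq_complex_def complex_eq_iff)

lemma cscalar_self_pos: assumes "v \<in> carrier_vec n" "v \<noteq> 0\<^sub>v n"
  shows "Re ((v :: complex vec) \<bullet>c v) > 0"
  using conjugate_square_greater_0_vec[OF assms(1)] assms by (simp add: less_complex_def)

definition nrm :: "complex vec \<Rightarrow> complex vec" where
  "nrm w = complex_of_real (1 / sqrt (Re (w \<bullet>c w))) \<cdot>\<^sub>v w"

lemma nrm_carrier[simp]: "w \<in> carrier_vec n \<Longrightarrow> nrm w \<in> carrier_vec n"
  unfolding nrm_def by simp

lemma nrm_unit: assumes "w \<in> carrier_vec n" "w \<noteq> 0\<^sub>v n"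
  shows "nrm w \<bullet>c nrm w = 1"
proof -
  define r where "r = Re (w \<bullet>c w)"
  have p: "r > 0" unfolding r_def by (rule cscalar_self_pos[OF assms])
  have e: "w \<bullet>c w = complex_of_real r" unfolding r_def by (rule cscalar_self_real)
  have "nrm w \<bullet>c nrm w = complex_of_real (1 / sqrt r) * cnj (complex_of_real (1 / sqrt r)) * (w \<bullet>c w)"
    unfolding nrm_def r_def by (rule cscalar_smult[OF assms(1) assms(1)])
  also have "\<dots> = complex_of_real (1 / sqrt r * (1 / sqrt r) * r)"
    unfolding e complex_cnj_complex_of_real by (simp only: of_real_mult)
  also have "1 / sqrt r * (1 / sqrt r) * r = 1"
    using p by (simp add: field_simps)
  finally show ?thesis by simp
qed

lemma nrm_orth: assumes "v \<in> carrier_vec n" "w \<in> carrier_vec n" "v \<bullet>c w = 0"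
  shows "nrm v \<bullet>c nrm w = 0"
  unfolding nrm_def by (subst cscalar_smult[OF assms(1,2)]) (simp add: assms(3))

lemma nrm_id: assumes "v \<bullet>c v = 1" shows "nrm v = v"
proof -
  have "nrm v = complex_of_real (1 / sqrt (Re 1)) \<cdot>\<^sub>v v" unfolding nrm_def assms ..
  also have "\<dots> = v" by (intro eq_vecI) auto
  finally show ?thesis .
qed

lemma orthonormal_ext:
  assumes v: "v \<in> carrier_vec n" and v1: "v \<bullet>c v = (1 :: complex)"
  shows "\<exists>W. W \<in> carrier_mat n n \<and> mat_adjoint W * W = 1\<^sub>m n \<and> col W 0 = v"
proof -
  have v0: "v \<noteq> 0\<^sub>v n" using v1 v by auto
  interpret cof_vec_space n "TYPE(complex)" .
  define b where "b = basis_completion v"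
  from basis_completion[OF v v0, folded b_def]
  have span_b: "span (set b) = carrier_vec n" and dist_b: "distinct b" 
    and indep: "\<not> lin_dep (set b)" and b: "set b \<subseteq> carrier_vec n" and hdb: "hd b = v" 
    and len_b: "length b = n" by auto
  have n: "n \<noteq> 0" using v0 v by (cases n) auto
  from hdb len_b n obtain vs where bv: "b = v # vs" by (cases b, auto)
  define ws where "ws = gram_schmidt n b"
  from gram_schmidt_result[OF b dist_b indep refl, folded ws_def]
  have ws: "set ws \<subseteq> carrier_vec n" "corthogonal ws" "length ws = n" 
    by (auto simp: len_b)
  from gram_schmidt_hd[OF v, of vs, folded bv] have hdws: "hd ws = v" unfolding ws_def .
  define us where "us = map nrm ws"
  define W where "W = mat_of_cols n us"
  have W: "W \<in> carrier_mat n n" unfolding W_def us_def using ws by auto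
  have wsc: "\<And>i. i < n \<Longrightarrow> ws ! i \<in> carrier_vec n" using ws by auto
  have colW: "\<And>i. i < n \<Longrightarrow> col W i = nrm (ws ! i)"
    unfolding W_def us_def using ws wsc by (subst col_mat_of_cols) auto
  have ws0: "\<And>i. i < n \<Longrightarrow> ws ! i \<noteq> 0\<^sub>v n"
    using ws(2,3) wsc unfolding corthogonal_def by (metis conjugate_square_eq_0_vec)
  show ?thesis
  proof (intro exI conjI)
    show "W \<in> carrier_mat n n" by fact
    show "mat_adjoint W * W = 1\<^sub>m n"
    proof (rule eq_matI)
      fix i j assume "i < dim_row (1\<^sub>m n)" "j < dim_col (1\<^sub>m n)"
      hence i: "i < n" and j: "j < n" by auto
      show "(mat_adjoint W * W) $$ (i, j) = 1\<^sub>m n $$ (i, j)"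
      proof (cases "i = j")
        case True
        have "(mat_adjoint W * W) $$ (i, j) = nrm (ws ! j) \<bullet>c nrm (ws ! i)"
          using gram_entry[OF W i j] colW[OF i] colW[OF j] by simp
        also have "\<dots> = 1" using True nrm_unit[OF wsc[OF j] ws0[OF j]] by simp
        finally show ?thesis using True i by simp
      next
        case False
        have "ws ! j \<bullet>c ws ! i = 0" using ws(2,3) i j False unfolding corthogonal_def by auto
        hence "nrm (ws ! j) \<bullet>c nrm (ws ! i) = 0" using nrm_orth[OF wsc[OF j] wsc[OF i]] by simp
        moreover have "(mat_adjoint W * W) $$ (i, j) = nrm (ws ! j) \<bullet>c nrm (ws ! i)"
          using gram_entry[OF W i j] colW[OF i] colW[OF j] by simp
        ultimately show ?thesis using False i j by simp
      qed
    qed (use W in auto)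
    have "ws ! 0 = v" using hdws ws(3) n by (cases ws) auto
    thus "col W 0 = v" using colW[of 0] n nrm_id[OF v1] by simp
  qed
qed


lemma adj_four_block:
  assumes A: "A \<in> carrier_mat n1 m1" and B: "B \<in> carrier_mat n1 m2"
    and C: "C \<in> carrier_mat n2 m1" and D: "D \<in> carrier_mat n2 m2"
  shows "mat_adjoint (four_block_mat A B C D :: complex mat) =
    four_block_mat (mat_adjoint A) (mat_adjoint C) (mat_adjoint B) (mat_adjoint D)"
proof (rule eq_matI)
  fix i j assume "i < dim_row (four_block_mat (mat_adjoint A) (mat_adjoint C) (mat_adjoint B) (mat_adjoint D))"
    "j < dim_col (four_block_mat (mat_adjoint A) (mat_adjoint C) (mat_adjoint B) (mat_adjoint D))"
  hence i: "i < m1 + m2" and j: "j < n1 + n2" using assms by auto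
  show "mat_adjoint (four_block_mat A B C D) $$ (i, j) =
    four_block_mat (mat_adjoint A) (mat_adjoint C) (mat_adjoint B) (mat_adjoint D) $$ (i, j)"
    using i j carrier_matD[OF A] carrier_matD[OF B] carrier_matD[OF C] carrier_matD[OF D]
    by (subst index_mat_four_block) auto
qed (use assms in auto)

lemma cscalar_smult_left: assumes "v \<in> carrier_vec n" "w \<in> carrier_vec n"
  shows "(c \<cdot>\<^sub>v v) \<bullet>c (w :: complex vec) = c * (v \<bullet>c w)"
  using assms by (simp add: cscalar_def sum_distrib_left ac_simps)

theorem spectral:
  fixes H :: "complex mat"
  assumes "H \<in> carrier_mat n n" "mat_adjoint H = H"
  shows "\<exists>U D. U \<in> carrier_mat n n \<and> D \<in> carrier_mat n n \<and> diagonal_mat D \<and>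
    mat_adjoint U * U = 1\<^sub>m n \<and> U * mat_adjoint U = 1\<^sub>m n \<and> H = U * D * mat_adjoint U"
  using assms
proof (induction n arbitrary: H)
  case 0
  thus ?case by (intro exI[of _ "1\<^sub>m 0"] exI[of _ H]) (auto simp: diagonal_mat_def)
next
  case (Suc m H)
  define n where "n = Suc m"
  have H: "H \<in> carrier_mat n n" and Hh: "mat_adjoint H = H" using Suc.prems n_def by auto
  have "\<not> constant (poly (char_poly H))"
    using degree_monic_char_poly[OF H] unfolding constant_degree n_def by simp
  then obtain e where "poly (char_poly H) e = 0" using fundamental_theorem_of_algebra by blast
  hence "eigenvalue H e" using eigenvalue_root_char_poly[OF H] by simp
  from find_eigenvector[OF H this]
  have "eigenvector H (find_eigenvector H e) e" .
  then obtain v0 where v0: "v0 \<in> carrier_vec n" "v0 \<noteq> 0\<^sub>v n" "H *\<^sub>v v0 = e \<cdot>\<^sub>v v0"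
    unfolding eigenvector_def using H by auto
  define v where "v = nrm v0"
  have v: "v \<in> carrier_vec n" unfolding v_def using v0 by simp
  have v1: "v \<bullet>c v = 1" unfolding v_def by (rule nrm_unit[OF v0(1,2)])
  have Hv: "H *\<^sub>v v = e \<cdot>\<^sub>v v" unfolding v_def nrm_def
    using mult_mat_vec[OF H v0(1)] v0(3) by (auto simp: smult_smult_assoc mult.commute)
  obtain W where W: "W \<in> carrier_mat n n" and WW: "mat_adjoint W * W = 1\<^sub>m n" and W0: "col W 0 = v"
    using orthonormal_ext[OF v v1] by blast
  have WW': "W * mat_adjoint W = 1\<^sub>m n"
    using mat_mult_left_right_inverse[OF adj_carrier[OF W] W WW] .
  define K where "K = mat_adjoint W * H * W"
  have K: "K \<in> carrier_mat n n" unfolding K_def using W H by auto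
  have Kh: "mat_adjoint K = K"
  proof -
    have "mat_adjoint K = mat_adjoint W * mat_adjoint (mat_adjoint W * H)"
      unfolding K_def by (rule adj_mult[of _ n n _ n]) (use W H in auto)
    also have "mat_adjoint (mat_adjoint W * H) = mat_adjoint H * W"
      by (subst adj_mult[of _ n n _ n]) (use W H in auto)
    finally show ?thesis unfolding K_def Hh using W H by (simp add: assoc_mult_mat[of _ n n _ n _ n])
  qed
  have Kcol: "K $$ (i, 0) = (if i = 0 then e else 0)" if i: "i < n" for i
  proof -
    have "K $$ (i, 0) = (H *\<^sub>v col W 0) \<bullet>c col W i"
      unfolding K_def by (rule quad_entry[OF W H i], simp add: n_def)
    also have "\<dots> = e * (col W 0 \<bullet>c col W i)"
      unfolding W0 Hv using v W i by (simp add: cscalar_smult_left[of _ n])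
    also have "col W 0 \<bullet>c col W i = (mat_adjoint W * W) $$ (i, 0)"
      using gram_entry[OF W i] by (simp add: n_def)
    also have "\<dots> = (if i = 0 then 1 else 0)" unfolding WW using i by (simp add: n_def)
    finally show ?thesis by simp
  qed
  have Krow: "K $$ (0, j) = (if j = 0 then cnj e else 0)" if j: "j < n" for j
  proof -
    have "K $$ (0, j) = mat_adjoint K $$ (0, j)" using Kh by simp
    also have "\<dots> = cnj (K $$ (j, 0))" using K j by (simp add: n_def)
    finally show ?thesis using Kcol[OF j] by simp
  qed
  have ereal: "cnj e = e" using Kcol[of 0] Krow[of 0] by (simp add: n_def)
  obtain K1 K2 K0 K3 where sb: "split_block K 1 1 = (K1, K2, K0, K3)"
    by (cases "split_block K 1 1") auto
  from split_block[OF sb, of m m] K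
  have K1: "K1 \<in> carrier_mat 1 1" and K2: "K2 \<in> carrier_mat 1 m" and K0: "K0 \<in> carrier_mat m 1"
    and K3: "K3 \<in> carrier_mat m m" and Kb: "K = four_block_mat K1 K2 K0 K3"
    by (auto simp: n_def)
  have K3e: "K3 $$ (i, j) = K $$ (Suc i, Suc j)" if "i < m" "j < m" for i j
    using that K1 K3 unfolding Kb by simp
  have K2z: "K2 = 0\<^sub>m 1 m"
  proof (rule eq_matI)
    fix i j assume "i < dim_row (0\<^sub>m 1 m :: complex mat)" "j < dim_col (0\<^sub>m 1 m :: complex mat)"
    hence ij: "i = 0" "j < m" by auto
    have "K $$ (0, Suc j) = K2 $$ (0, j)" unfolding Kb using K1 K2 K3 ij by simp
    thus "K2 $$ (i, j) = 0\<^sub>m 1 m $$ (i, j)" using Krow[of "Suc j"] ij by (simp add: n_def)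
  qed (use K2 in auto)
  have K0z: "K0 = 0\<^sub>m m 1"
  proof (rule eq_matI)
    fix i j assume "i < dim_row (0\<^sub>m m 1 :: complex mat)" "j < dim_col (0\<^sub>m m 1 :: complex mat)"
    hence ij: "j = 0" "i < m" by auto
    have "K $$ (Suc i, 0) = K0 $$ (i, 0)" unfolding Kb using K1 K0 K3 ij by simp
    thus "K0 $$ (i, j) = 0\<^sub>m m 1 $$ (i, j)" using Kcol[of "Suc i"] ij by (simp add: n_def)
  qed (use K0 in auto)
  have K3h: "mat_adjoint K3 = K3"
  proof (rule eq_matI)
    fix i j assume "i < dim_row K3" "j < dim_col K3"
    hence ij: "i < m" "j < m" using K3 by auto
    have "mat_adjoint K $$ (Suc i, Suc j) = cnj (K $$ (Suc j, Suc i))"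
      using K ij by (simp add: n_def)
    thus "mat_adjoint K3 $$ (i, j) = K3 $$ (i, j)"
      using K3 ij K3e Kh by simp
  qed (use K3 in auto)
  from Suc.IH[OF K3 K3h] obtain U' D' where U': "U' \<in> carrier_mat m m" and D': "D' \<in> carrier_mat m m"
    and dD': "diagonal_mat D'" and UU': "mat_adjoint U' * U' = 1\<^sub>m m"
    and K3d: "K3 = U' * D' * mat_adjoint U'" by blast
  define F where "F = four_block_mat (1\<^sub>m 1) (0\<^sub>m 1 m) (0\<^sub>m m 1) U'"
  define D where "D = four_block_mat K1 (0\<^sub>m 1 m) (0\<^sub>m m 1) D'"
  have F: "F \<in> carrier_mat n n" unfolding F_def n_def using U' by (simp add: four_block_carrier_mat[of _ 1 1 _ m m, simplified])
  have D: "D \<in> carrier_mat n n" unfolding D_def n_def using K1 D' by (simp add: four_block_carrier_mat[of _ 1 1 _ m m, simplified])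
  have adjF: "mat_adjoint F = four_block_mat (1\<^sub>m 1) (0\<^sub>m 1 m) (0\<^sub>m m 1) (mat_adjoint U')"
    unfolding F_def by (subst adj_four_block[of _ 1 1 _ m _ m]) (use U' in auto)
  have FF: "mat_adjoint F * F = 1\<^sub>m n"
  proof -
    have "mat_adjoint F * F = four_block_mat (1\<^sub>m 1) (0\<^sub>m 1 m) (0\<^sub>m m 1) (mat_adjoint U') *
      four_block_mat (1\<^sub>m 1) (0\<^sub>m 1 m) (0\<^sub>m m 1) U'" by (simp only: adjF) (simp add: F_def)
    also have "\<dots> = 1\<^sub>m n" using U' UU'
      by (subst mult_four_block_mat[of _ 1 1 _ m _ m _ _ 1 _ m]) (auto simp: n_def)
    finally show ?thesis .
  qed
  have KF: "K = F * D * mat_adjoint F"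
  proof -
    have "F * D = four_block_mat K1 (0\<^sub>m 1 m) (0\<^sub>m m 1) (U' * D')"
      unfolding F_def D_def using U' D' K1
      by (subst mult_four_block_mat[of _ 1 1 _ m _ m _ _ 1 _ m]) auto
    hence "F * D * mat_adjoint F = four_block_mat K1 (0\<^sub>m 1 m) (0\<^sub>m m 1) (U' * D' * mat_adjoint U')"
      unfolding adjF using U' D' K1
      by (simp, subst mult_four_block_mat[of _ 1 1 _ m _ m _ _ 1 _ m]) auto
    thus ?thesis unfolding Kb K2z K0z K3d by simp
  qed
  define U where "U = W * F"
  have U: "U \<in> carrier_mat n n" unfolding U_def using W F by simp
  have adjU: "mat_adjoint U = mat_adjoint F * mat_adjoint W" unfolding U_def by (rule adj_mult[OF W F])
  have UU: "mat_adjoint U * U = 1\<^sub>m n"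
  proof -
    have "mat_adjoint U * U = (mat_adjoint F * mat_adjoint W) * (W * F)"
      unfolding adjU by (simp add: U_def del: assoc_mult_mat)
    also have "\<dots> = mat_adjoint F * ((mat_adjoint W * W) * F)"
      using W F by (simp add: assoc_mult_mat[of _ n n _ n _ n] mult_carrier_mat[of _ n n _ n] del: assoc_mult_mat)
    also have "\<dots> = 1\<^sub>m n" using WW FF F by simp
    finally show ?thesis .
  qed
  have HU: "H = U * D * mat_adjoint U"
  proof -
    have "H = (W * mat_adjoint W) * H * (W * mat_adjoint W)" using WW' H by simp
    also have "\<dots> = W * K * mat_adjoint W" unfolding K_def using W H by (simp add: assoc_mult_mat[of _ n n _ n _ n] mult_carrier_mat[of _ n n _ n] del: assoc_mult_mat)
    also have "\<dots> = W * (F * D * mat_adjoint F) * mat_adjoint W" by (simp only: KF)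
    also have "\<dots> = (W * F) * D * (mat_adjoint F * mat_adjoint W)" using W F D by (simp add: assoc_mult_mat[of _ n n _ n _ n] mult_carrier_mat[of _ n n _ n] del: assoc_mult_mat)
    also have "\<dots> = U * D * mat_adjoint U" unfolding adjU by (simp only: U_def)
    finally show ?thesis .
  qed
  have dD: "diagonal_mat D"
    unfolding diagonal_mat_def D_def using carrier_matD[OF K1] carrier_matD[OF D'] dD' unfolding diagonal_mat_def
    by auto
  show ?case unfolding n_def[symmetric]
    using U D dD UU mat_mult_left_right_inverse[OF adj_carrier[OF U] U UU] HU by blast
qed


definition dmat :: "nat \<Rightarrow> (nat \<Rightarrow> real) \<Rightarrow> complex mat" where
  "dmat n f = mat n n (\<lambda>(i,j). if i = j then complex_of_real (f i) else 0)"

lemma dmat_carrier[simp]: "dmat n f \<in> carrier_mat n n"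
  unfolding dmat_def by simp

lemma dmat_index[simp]: "i < n \<Longrightarrow> j < n \<Longrightarrow> dmat n f $$ (i,j) = (if i = j then complex_of_real (f i) else 0)"
  "dim_row (dmat n f) = n" "dim_col (dmat n f) = n"
  unfolding dmat_def by auto

lemma proots_linear_prod: "proots (\<Prod>a\<leftarrow>xs. [:- a, 1:]) = mset (xs :: complex list)"
proof (induction xs)
  case (Cons a xs)
  have nz: "(\<Prod>a\<leftarrow>xs. [:- a, 1:]) \<noteq> 0"
  proof
    assume "(\<Prod>a\<leftarrow>xs. [:- a, 1:]) = 0"
    hence "0 \<in> set (map (\<lambda>a. [:- a, 1:]) xs)" by (simp only: prod_list_zero_iff)
    then obtain a where "[:- a, 1:] = (0 :: complex poly)" by auto
    thus False by simp
  qed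
  have "proots ([:- a, 1:] * (\<Prod>a\<leftarrow>xs. [:- a, 1:])) = proots [:- a, 1:] + proots (\<Prod>a\<leftarrow>xs. [:- a, 1:])"
    by (rule proots_mult) (simp, rule nz)
  moreover have "proots [:- a, 1:] = {#a#}" using proots_linear_factor[of "-a"] by simp
  ultimately show ?case using Cons by simp
qed simp

lemma Eig_similar:
  assumes X: "X \<in> carrier_mat n n" and P: "P \<in> carrier_mat n n" and Q: "Q \<in> carrier_mat n n"
    and PQ: "P * Q = 1\<^sub>m n" and QP: "Q * P = 1\<^sub>m n" and XP: "X = P * dmat n ((!) ls) * Q"
    and len: "length ls = n" and srt: "sorted (rev ls)"
  shows "Eig X = ls"
proof -
  have "similar_mat X (dmat n ((!) ls))" unfolding similar_mat_def similar_mat_wit_def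
    using X P Q PQ QP XP by (intro exI[of _ P] exI[of _ Q]) auto
  hence "char_poly X = char_poly (dmat n ((!) ls))" by (rule char_poly_similar)
  also have "\<dots> = (\<Prod>a\<leftarrow>diag_mat (dmat n ((!) ls)). [:- a, 1:])"
    by (rule char_poly_upper_triangular[of _ n]) (auto simp: upper_triangular_def)
  also have "diag_mat (dmat n ((!) ls)) = map complex_of_real ls"
    using len by (intro nth_equalityI) (auto simp: diag_mat_def)
  finally have cp: "char_poly X = (\<Prod>a\<leftarrow>map complex_of_real ls. [:- a, 1:])" .
  have "proots (char_poly X) = mset (map complex_of_real ls)"
    unfolding cp proots_linear_prod ..
  hence "image_mset Re (proots (char_poly X)) = mset ls" by (simp add: multiset.map_comp o_def)
  hence "Eig X = rev (sort ls)" unfolding Eig_def by simp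
  also have "sort ls = rev ls" by (rule properties_for_sort) (simp_all add: srt)
  finally show ?thesis by simp
qed

lemma diag_entry: assumes U: "U \<in> carrier_mat n n" and i: "i < n" and j: "j < n"
  shows "(U * dmat n f * mat_adjoint U) $$ (i,j) = (\<Sum>l<n. U $$ (i,l) * complex_of_real (f l) * cnj (U $$ (j,l)))"
proof -
  have row: "\<And>l. l < n \<Longrightarrow> (U * dmat n f) $$ (i,l) = U $$ (i,l) * complex_of_real (f l)"
    using U i by (simp add: scalar_prod_def row_def col_def if_distrib sum.delta' cong: if_cong)
  have UD: "U * dmat n f \<in> carrier_mat n n" using U by simp
  have "(U * dmat n f * mat_adjoint U) $$ (i,j) = row (U * dmat n f) i \<bullet> col (mat_adjoint U) j"
    using U UD i j by (intro index_mult_mat) auto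
  also have "\<dots> = (\<Sum>l<n. (U * dmat n f) $$ (i,l) * mat_adjoint U $$ (l,j))"
    unfolding scalar_prod_def
  proof (intro sum.cong)
    fix l assume "l \<in> {..<n}"
    hence l: "l < n" by simp
    show "row (U * dmat n f) i $ l * col (mat_adjoint U) j $ l = (U * dmat n f) $$ (i, l) * mat_adjoint U $$ (l, j)"
      using U UD i j l carrier_matD[OF UD] by (simp add: index_row index_col del: index_mult_mat)
  qed (use U in \<open>auto simp: atLeast0LessThan\<close>)
  also have "\<dots> = (\<Sum>l<n. U $$ (i,l) * complex_of_real (f l) * cnj (U $$ (j,l)))"
    using U i j row by (intro sum.cong) auto
  finally show ?thesis .
qed


lemma spectral_sorted:
  fixes H :: "complex mat"
  assumes H: "H \<in> carrier_mat n n" and Hh: "mat_adjoint H = H"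
  shows "\<exists>U ls. U \<in> carrier_mat n n \<and> mat_adjoint U * U = 1\<^sub>m n \<and> U * mat_adjoint U = 1\<^sub>m n \<and>
    length ls = n \<and> sorted (rev ls) \<and> H = U * dmat n ((!) ls) * mat_adjoint U"
proof -
  obtain U D where U: "U \<in> carrier_mat n n" and D: "D \<in> carrier_mat n n" and dD: "diagonal_mat D"
    and UU: "mat_adjoint U * U = 1\<^sub>m n" and UU': "U * mat_adjoint U = 1\<^sub>m n" and HD: "H = U * D * mat_adjoint U"
    using spectral[OF H Hh] by blast
  have DU: "D = mat_adjoint U * H * U"
  proof -
    have "mat_adjoint U * H * U = (mat_adjoint U * U) * D * (mat_adjoint U * U)"
      unfolding HD using U D by (simp add: assoc_mult_mat[of _ n n _ n _ n] mult_carrier_mat[of _ n n _ n] del: assoc_mult_mat)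
    thus ?thesis using UU D by simp
  qed
  have Dh: "mat_adjoint D = D"
  proof -
    have "mat_adjoint D = mat_adjoint U * mat_adjoint (mat_adjoint U * H)"
      unfolding DU by (rule adj_mult[of _ n n _ n]) (use U H in auto)
    also have "mat_adjoint (mat_adjoint U * H) = mat_adjoint H * U"
      by (subst adj_mult[of _ n n _ n]) (use U H in auto)
    finally show ?thesis unfolding DU Hh using U H by (simp add: assoc_mult_mat[of _ n n _ n _ n])
  qed
  define ds where "ds = map (\<lambda>i. Re (D $$ (i,i))) [0..<n]"
  have Dd: "D = dmat n ((!) ds)"
  proof (rule eq_matI)
    fix i j assume "i < dim_row (dmat n ((!) ds))" "j < dim_col (dmat n ((!) ds))"
    hence ij: "i < n" "j < n" by auto
    have "cnj (D $$ (i,i)) = D $$ (i,i)" using arg_cong[OF Dh, of "\<lambda>M. M $$ (i,i)"] D ij by simp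
    hence "D $$ (i,i) = complex_of_real (Re (D $$ (i,i)))" by (simp add: complex_eq_iff)
    thus "D $$ (i, j) = dmat n ((!) ds) $$ (i, j)" using dD D ij unfolding diagonal_mat_def ds_def by auto
  qed (use D in auto)
  define ls where "ls = rev (sort ds)"
  have len: "length ls = n" "length ds = n" unfolding ls_def ds_def by auto
  have "mset ls = mset ds" unfolding ls_def by simp
  from permutation_Ex_bij[OF this] obtain f where f: "bij_betw f {..<n} {..<n}"
    and lf: "\<And>i. i < n \<Longrightarrow> ls ! i = ds ! f i" using len by auto
  have fn: "\<And>i. i < n \<Longrightarrow> f i < n" using f by (auto simp: bij_betw_def)
  have finj: "\<And>i j. i < n \<Longrightarrow> j < n \<Longrightarrow> f i = f j \<longleftrightarrow> i = j" using f by (auto simp: bij_betw_def inj_on_def)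
  define U' where "U' = mat n n (\<lambda>(i,j). U $$ (i, f j))"
  have U': "U' \<in> carrier_mat n n" unfolding U'_def by simp
  have colU': "\<And>j. j < n \<Longrightarrow> col U' j = col U (f j)"
    unfolding U'_def using U fn by (intro eq_vecI) auto
  have UU1: "mat_adjoint U' * U' = 1\<^sub>m n"
  proof (rule eq_matI)
    fix i j assume "i < dim_row (1\<^sub>m n)" "j < dim_col (1\<^sub>m n)"
    hence ij: "i < n" "j < n" by auto
    have "(mat_adjoint U' * U') $$ (i,j) = col U (f j) \<bullet>c col U (f i)"
      using gram_entry[OF U' ij] colU' ij by simp
    also have "\<dots> = (mat_adjoint U * U) $$ (f i, f j)" using gram_entry[OF U fn fn] ij by simp
    also have "\<dots> = 1\<^sub>m n $$ (i,j)" unfolding UU using ij fn finj by simp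
    finally show "(mat_adjoint U' * U') $$ (i,j) = 1\<^sub>m n $$ (i,j)" .
  qed (use U' in auto)
  have HU': "H = U' * dmat n ((!) ls) * mat_adjoint U'"
  proof (rule eq_matI)
    fix i j assume "i < dim_row (U' * dmat n ((!) ls) * mat_adjoint U')" "j < dim_col (U' * dmat n ((!) ls) * mat_adjoint U')"
    hence ij: "i < n" "j < n" using U' by auto
    have "(U' * dmat n ((!) ls) * mat_adjoint U') $$ (i,j) = (\<Sum>l<n. U' $$ (i,l) * complex_of_real (ls ! l) * cnj (U' $$ (j,l)))"
      by (rule diag_entry[OF U' ij])
    also have "\<dots> = (\<Sum>l<n. (\<lambda>k. U $$ (i,k) * complex_of_real (ds ! k) * cnj (U $$ (j,k))) (f l))"
      unfolding U'_def using ij lf by (intro sum.cong) auto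
    also have "\<dots> = (\<Sum>k<n. U $$ (i,k) * complex_of_real (ds ! k) * cnj (U $$ (j,k)))"
      by (rule sum.reindex_bij_betw[OF f])
    also have "\<dots> = (U * dmat n ((!) ds) * mat_adjoint U) $$ (i,j)"
      by (rule diag_entry[OF U ij, symmetric])
    finally show "H $$ (i,j) = (U' * dmat n ((!) ls) * mat_adjoint U') $$ (i,j)"
      using HD Dd by simp
  qed (use H U' in auto)
  have srt: "sorted (rev ls)" unfolding ls_def by simp
  show ?thesis
    using U' UU1 mat_mult_left_right_inverse[OF adj_carrier[OF U'] U' UU1] len srt HU' by blast
qed

lemma dmat_mult: "dmat n f * dmat n g = dmat n (\<lambda>i. f i * g i)"
proof (rule eq_matI)
  fix i j assume "i < dim_row (dmat n (\<lambda>i. f i * g i))" "j < dim_col (dmat n (\<lambda>i. f i * g i))"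
  hence ij: "i < n" "j < n" by auto
  have "(dmat n f * dmat n g) $$ (i,j) = (\<Sum>k\<in>{0..<n}. (if i = k then complex_of_real (f i) else 0) * (if k = j then complex_of_real (g k) else 0))"
    using ij by (simp add: scalar_prod_def row_def col_def)
  also have "\<dots> = (if i = j then complex_of_real (f i * g i) else 0)"
    using ij by (simp add: if_distrib sum.delta cong: if_cong)
  finally show "(dmat n f * dmat n g) $$ (i,j) = dmat n (\<lambda>i. f i * g i) $$ (i,j)" using ij by simp
qed auto

lemma adj_dmat[simp]: "mat_adjoint (dmat n f) = dmat n f"
  by (rule eq_matI) auto

lemma dmat_mult_vec: assumes "g \<in> carrier_vec n" "i < n"
  shows "(dmat n f *\<^sub>v g) $ i = complex_of_real (f i) * g $ i"
proof -
  have "(dmat n f *\<^sub>v g) $ i = (\<Sum>k\<in>{0..<n}. (if i = k then complex_of_real (f i) else 0) * g $ k)"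
    using assms by (simp add: scalar_prod_def row_def)
  also have "\<dots> = (\<Sum>k\<in>{0..<n}. (if i = k then complex_of_real (f i) * g $ k else 0))"
    by (intro sum.cong) auto
  also have "\<dots> = complex_of_real (f i) * g $ i"
    using assms by simp
  finally show ?thesis .
qed

definition mtrace :: "complex mat \<Rightarrow> complex" where
  "mtrace A = (\<Sum>i<dim_row A. A $$ (i,i))"

lemma mtrace_comm: assumes A: "A \<in> carrier_mat n m" and B: "B \<in> carrier_mat m n"
  shows "mtrace (A * B) = mtrace (B * A)"
proof -
  have "mtrace (A * B) = (\<Sum>i<n. \<Sum>k<m. A $$ (i,k) * B $$ (k,i))"
    unfolding mtrace_def using A B by (auto simp: scalar_prod_def atLeast0LessThan intro!: sum.cong)
  also have "\<dots> = (\<Sum>k<m. \<Sum>i<n. B $$ (k,i) * A $$ (i,k))"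
    by (subst sum.swap) (simp add: mult.commute)
  also have "\<dots> = mtrace (B * A)"
    unfolding mtrace_def using A B by (auto simp: scalar_prod_def atLeast0LessThan intro!: sum.cong)
  finally show ?thesis .
qed

lemma trace_dmat_right: assumes C: "C \<in> carrier_mat n n"
  shows "mtrace (C * dmat n f) = (\<Sum>i<n. C $$ (i,i) * complex_of_real (f i))"
proof -
  have "\<And>i. i < n \<Longrightarrow> (C * dmat n f) $$ (i,i) = C $$ (i,i) * complex_of_real (f i)"
  proof -
    fix i assume i: "i < n"
    have "(C * dmat n f) $$ (i,i) = (\<Sum>k\<in>{0..<n}. C $$ (i,k) * (if k = i then complex_of_real (f k) else 0))"
      using C i by (simp add: scalar_prod_def row_def col_def)
    also have "\<dots> = C $$ (i,i) * complex_of_real (f i)"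
      using i by (simp add: if_distrib sum.delta' cong: if_cong)
    finally show "(C * dmat n f) $$ (i,i) = C $$ (i,i) * complex_of_real (f i)" .
  qed
  thus ?thesis using C unfolding mtrace_def by (auto intro!: sum.cong simp: atLeast0LessThan)
qed

lemma trace_dmat: "mtrace (dmat n f) = (\<Sum>i<n. complex_of_real (f i))"
  using trace_dmat_right[where C = "1\<^sub>m n" and n = n and f = f] by simp

lemma quad2: assumes P: "P \<in> carrier_mat n k" and M: "M \<in> carrier_mat n n" and Q: "Q \<in> carrier_mat n k"
  and i: "i < k" and j: "j < k"
  shows "(mat_adjoint P * M * Q :: complex mat) $$ (i,j) = (M *\<^sub>v col Q j) \<bullet>c col P i"
proof -
  have "mat_adjoint P * M * Q = mat_adjoint P * (M * Q)"
    using P M Q by (intro assoc_mult_mat[of _ k n _ n _ k]) auto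
  hence "(mat_adjoint P * M * Q) $$ (i,j) = row (mat_adjoint P) i \<bullet> col (M * Q) j"
    using P M Q i j by simp
  also have "\<dots> = conjugate (col P i) \<bullet> (M *\<^sub>v col Q j)"
    by (simp only: row_adj[OF P i] col_mult2[OF M Q j])
  also have "\<dots> = (M *\<^sub>v col Q j) \<bullet>c col P i"
    by (rule conjugate_vec_sprod_comm[symmetric, of _ n], insert P M Q j, auto)
  finally show ?thesis .
qed

definition nsq :: "complex vec \<Rightarrow> real" where "nsq v = Re (v \<bullet>c v)"

lemma nsq_sum: "nsq v = (\<Sum>i<dim_vec v. (cmod (v $ i))^2)"
  unfolding nsq_def cscalar_def by (simp add: complex_mult_cnj cmod_power2 sum.distrib)

lemma nsq_nonneg: "nsq v \<ge> 0"
  unfolding nsq_sum by (simp add: sum_nonneg)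

lemma real_cs: fixes x y :: "nat \<Rightarrow> real"
  shows "(\<Sum>i\<in>I. x i * y i)^2 \<le> (\<Sum>i\<in>I. (x i)^2) * (\<Sum>i\<in>I. (y i)^2)"
proof (cases "finite I")
  case fin: True
  define A where "A = (\<Sum>i\<in>I. (x i)^2)"
  define B where "B = (\<Sum>i\<in>I. x i * y i)"
  define C where "C = (\<Sum>i\<in>I. (y i)^2)"
  have A0: "A \<ge> 0" unfolding A_def by (simp add: sum_nonneg)
  have "0 \<le> (\<Sum>i\<in>I. (A * y i - B * x i)^2)" by (simp add: sum_nonneg)
  also have "(\<Sum>i\<in>I. (A * y i - B * x i)^2) = (\<Sum>i\<in>I. A^2 * (y i)^2 - 2 * A * B * (x i * y i) + B^2 * (x i)^2)"
    by (intro sum.cong) (auto simp: power2_eq_square algebra_simps)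
  also have "\<dots> = A^2 * C - 2 * A * B * B + B^2 * A"
    unfolding A_def B_def C_def by (simp add: sum.distrib sum_subtractf sum_distrib_left)
  also have "\<dots> = A * (A * C - B^2)" by (simp add: power2_eq_square algebra_simps)
  finally have *: "0 \<le> A * (A * C - B^2)" .
  show ?thesis
  proof (cases "A = 0")
    case True
    hence "\<forall>i\<in>I. (x i)^2 = 0" using fin unfolding A_def by (subst (asm) sum_nonneg_eq_0_iff) auto
    hence "B = 0" unfolding B_def by simp
    thus ?thesis unfolding B_def[symmetric] A_def[symmetric] C_def[symmetric] using A0 by (simp add: C_def sum_nonneg)
  next
    case False
    hence "A > 0" using A0 by simp
    hence "A * C - B^2 \<ge> 0" using * by (simp add: zero_le_mult_iff)
    thus ?thesis unfolding B_def[symmetric] A_def[symmetric] C_def[symmetric] by simp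
  qed
qed simp

lemma cs: assumes "v \<in> carrier_vec n" "w \<in> carrier_vec n"
  shows "(cmod (v \<bullet>c w))^2 \<le> nsq v * nsq w"
proof -
  have "cmod (v \<bullet>c w) \<le> (\<Sum>i<n. cmod (v $ i) * cmod (w $ i))"
    unfolding cscalar_def using assms
    by (auto intro!: order.trans[OF norm_sum] simp: norm_mult)
  hence "(cmod (v \<bullet>c w))^2 \<le> (\<Sum>i<n. cmod (v $ i) * cmod (w $ i))^2"
    by (simp add: power_mono)
  also have "\<dots> \<le> (\<Sum>i<n. (cmod (v $ i))^2) * (\<Sum>i<n. (cmod (w $ i))^2)" by (rule real_cs)
  finally show ?thesis using assms by (simp add: nsq_sum)
qed

lemma kant_scalar: fixes p z :: "nat \<Rightarrow> real"
  assumes fin: "finite I" and p: "\<And>i. i \<in> I \<Longrightarrow> p i \<ge> 0"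
    and z: "\<And>i. i \<in> I \<Longrightarrow> b \<le> z i \<and> z i \<le> a" and b: "0 < b" and ba: "b \<le> a"
  shows "(\<Sum>i\<in>I. p i) * (\<Sum>i\<in>I. p i * (z i)^2) \<le> (a+b)^2 / (4*a*b) * (\<Sum>i\<in>I. p i * z i)^2"
proof -
  define S0 where "S0 = (\<Sum>i\<in>I. p i)"
  define S1 where "S1 = (\<Sum>i\<in>I. p i * z i)"
  define S2 where "S2 = (\<Sum>i\<in>I. p i * (z i)^2)"
  have ab: "0 < a" "0 < b" using b ba by auto
  have "S2 \<le> (\<Sum>i\<in>I. (a+b) * (p i * z i) - a*b * p i)" unfolding S2_def
  proof (rule sum_mono)
    fix i assume i: "i \<in> I"
    have "(z i - b) * (a - z i) \<ge> 0" using z[OF i] by simp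
    hence "p i * ((z i - b) * (a - z i)) \<ge> 0" using p[OF i] by simp
    thus "p i * (z i)^2 \<le> (a+b) * (p i * z i) - a*b * p i"
      by (simp add: power2_eq_square algebra_simps)
  qed
  also have "\<dots> = (a+b) * S1 - a*b*S0" unfolding S0_def S1_def
    by (simp add: sum_subtractf sum_distrib_left)
  finally have 1: "S2 \<le> (a+b) * S1 - a*b*S0" .
  have S0: "S0 \<ge> 0" unfolding S0_def using p by (simp add: sum_nonneg)
  have "S0 * S2 \<le> S0 * ((a+b) * S1 - a*b*S0)" using 1 S0 by (rule mult_left_mono)
  also have "\<dots> \<le> (a+b)^2 / (4*a*b) * S1^2"
  proof -
    have "0 \<le> ((a+b) * S1 - 2*a*b*S0)^2" by simp
    hence "4*a*b * (S0 * ((a+b) * S1 - a*b*S0)) \<le> (a+b)^2 * S1^2"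
      by (simp add: power2_eq_square algebra_simps)
    thus ?thesis using ab by (simp add: field_simps)
  qed
  finally show ?thesis unfolding S0_def S1_def S2_def .
qed

lemma cscalar_conj: assumes "v \<in> carrier_vec n" "w \<in> carrier_vec n"
  shows "(v :: complex vec) \<bullet>c w = cnj (w \<bullet>c v)"
  using assms by (simp add: cscalar_def sum_conjugate mult.commute)

lemma cscalar_adj_right: assumes A: "A \<in> carrier_mat n m" and v: "v \<in> carrier_vec n" and w: "w \<in> carrier_vec m"
  shows "(v :: complex vec) \<bullet>c (A *\<^sub>v w) = (mat_adjoint A *\<^sub>v v) \<bullet>c w"
  using adj_cscalar[OF adj_carrier[OF A] v w] by simp

lemma dmat_vec_carrier[simp]: "d \<in> carrier_vec n \<Longrightarrow> dmat n e *\<^sub>v d \<in> carrier_vec n"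
  by (rule mult_mat_vec_carrier[OF dmat_carrier])

lemma dmat_cscalar: assumes d: "d \<in> carrier_vec n"
  shows "(dmat n e *\<^sub>v d) \<bullet>c d = (\<Sum>i<n. complex_of_real (e i * (cmod (d $ i))^2))"
proof -
  have "(dmat n e *\<^sub>v d) \<bullet>c d = (\<Sum>i<n. (dmat n e *\<^sub>v d) $ i * cnj (d $ i))"
    using d by (simp add: cscalar_def)
  also have "\<dots> = (\<Sum>i<n. complex_of_real (e i * (cmod (d $ i))^2))"
  proof (intro sum.cong refl)
    fix i assume "i \<in> {..<n}"
    hence i: "i < n" by simp
    show "(dmat n e *\<^sub>v d) $ i * cnj (d $ i) = complex_of_real (e i * (cmod (d $ i))^2)"
      unfolding dmat_mult_vec[OF d i] by (simp only: mult.assoc complex_norm_square[symmetric] of_real_mult)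
  qed
  finally show ?thesis .
qed

lemma dmat_cscalar2: assumes d: "d \<in> carrier_vec n"
  shows "(dmat n e *\<^sub>v d) \<bullet>c (dmat n e *\<^sub>v d) = (\<Sum>i<n. complex_of_real ((e i)^2 * (cmod (d $ i))^2))"
proof -
  have "(dmat n e *\<^sub>v d) \<bullet>c (dmat n e *\<^sub>v d) = (\<Sum>i<n. (dmat n e *\<^sub>v d) $ i * cnj ((dmat n e *\<^sub>v d) $ i))"
    using d by (simp add: cscalar_def)
  also have "\<dots> = (\<Sum>i<n. complex_of_real ((e i)^2 * (cmod (d $ i))^2))"
  proof (intro sum.cong refl)
    fix i assume "i \<in> {..<n}"
    hence i: "i < n" by simp
    have "complex_of_real (e i) * d $ i * cnj (complex_of_real (e i) * d $ i) =
      complex_of_real (e i) * complex_of_real (e i) * (d $ i * cnj (d $ i))" by (simp add: ac_simps)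
    thus "(dmat n e *\<^sub>v d) $ i * cnj ((dmat n e *\<^sub>v d) $ i) = complex_of_real ((e i)^2 * (cmod (d $ i))^2)"
      unfolding dmat_mult_vec[OF d i] complex_norm_square[symmetric] by (simp add: power2_eq_square)
  qed
  finally show ?thesis .
qed

lemma cscalar_dmat: assumes "d \<in> carrier_vec n"
  shows "d \<bullet>c (dmat n e *\<^sub>v d) = (\<Sum>i<n. complex_of_real (e i * (cmod (d $ i))^2))"
proof -
  have "d \<bullet>c (dmat n e *\<^sub>v d) = cnj ((dmat n e *\<^sub>v d) \<bullet>c d)"
    by (rule cscalar_conj[of _ n]) (use assms in auto)
  also have "\<dots> = (\<Sum>i<n. complex_of_real (e i * (cmod (d $ i))^2))"
    unfolding dmat_cscalar[OF assms] by (simp add: sum_conjugate)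
  finally show ?thesis .
qed

lemma qf: assumes U: "U \<in> carrier_mat n n" and y: "y \<in> carrier_vec n"
  shows "y \<bullet>c ((U * dmat n e * mat_adjoint U) *\<^sub>v y) = (\<Sum>i<n. complex_of_real (e i * (cmod ((mat_adjoint U *\<^sub>v y) $ i))^2))"
proof -
  have "(U * dmat n e * mat_adjoint U) *\<^sub>v y = U *\<^sub>v (dmat n e *\<^sub>v (mat_adjoint U *\<^sub>v y))"
    using U y by (simp add: assoc_mult_mat_vec[of _ n n _ n] mult_carrier_mat[of _ n n _ n] mult_mat_vec_carrier[of _ n n] del: assoc_mult_mat_vec)
  hence "y \<bullet>c ((U * dmat n e * mat_adjoint U) *\<^sub>v y) = (mat_adjoint U *\<^sub>v y) \<bullet>c (dmat n e *\<^sub>v (mat_adjoint U *\<^sub>v y))"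
    using cscalar_adj_right[OF U y dmat_vec_carrier[OF mult_mat_vec_carrier[OF adj_carrier[OF U] y]]] by simp
  also have "\<dots> = (\<Sum>i<n. complex_of_real (e i * (cmod ((mat_adjoint U *\<^sub>v y) $ i))^2))"
    by (rule cscalar_dmat, rule mult_mat_vec_carrier[OF adj_carrier[OF U] y])
  finally show ?thesis .
qed

lemma dmat_cong: "(\<And>i. i < n \<Longrightarrow> f i = g i) \<Longrightarrow> dmat n f = dmat n g"
  by (rule eq_matI) auto

lemma dmat_one: "dmat n (\<lambda>_. 1) = 1\<^sub>m n"
  by (rule eq_matI) auto

lemma fc_mult: assumes U: "(U :: complex mat) \<in> carrier_mat n n" and UU: "mat_adjoint U * U = 1\<^sub>m n"
  shows "(U * dmat n f * mat_adjoint U) * (U * dmat n g * mat_adjoint U) = U * dmat n (\<lambda>i. f i * g i) * mat_adjoint U"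
proof -
  have "(U * dmat n f * mat_adjoint U) * (U * dmat n g * mat_adjoint U) = U * dmat n f * (mat_adjoint U * U) * dmat n g * mat_adjoint U"
    using U by (simp add: assoc_mult_mat[of _ n n _ n _ n] mult_carrier_mat[of _ n n _ n] del: assoc_mult_mat)
  also have "\<dots> = U * (dmat n f * dmat n g) * mat_adjoint U"
    unfolding UU using U by (simp add: assoc_mult_mat[of _ n n _ n _ n] mult_carrier_mat[of _ n n _ n] del: assoc_mult_mat)
  finally show ?thesis by (simp add: dmat_mult)
qed

lemma fc_adj: assumes U: "(U :: complex mat) \<in> carrier_mat n n"
  shows "mat_adjoint (U * dmat n f * mat_adjoint U) = U * dmat n f * mat_adjoint U"
proof -
  have "mat_adjoint (U * dmat n f * mat_adjoint U) = mat_adjoint (mat_adjoint U) * mat_adjoint (U * dmat n f)"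
    by (rule adj_mult[of _ n n]) (use U in auto)
  also have "mat_adjoint (U * dmat n f) = dmat n f * mat_adjoint U"
    by (subst adj_mult[of _ n n _ n]) (use U in auto)
  finally show ?thesis using U by (simp add: assoc_mult_mat[of _ n n _ n _ n] mult_carrier_mat[of _ n n _ n] del: assoc_mult_mat)
qed

lemma fc_carrier[simp]: "U \<in> carrier_mat n n \<Longrightarrow> U * dmat n f * mat_adjoint (U :: complex mat) \<in> carrier_mat n n"
  by (simp add: mult_carrier_mat[of _ n n _ n])

lemma unit_col: assumes U: "(U :: complex mat) \<in> carrier_mat n n" and UU: "mat_adjoint U * U = 1\<^sub>m n" and i: "i < n"
  shows "col U i \<bullet>c col U i = 1"
  using gram_entry[OF U i i] UU i by simp

lemma eigvec: assumes U: "(U :: complex mat) \<in> carrier_mat n n" and UU: "mat_adjoint U * U = 1\<^sub>m n" and i: "i < n"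
  shows "(U * dmat n f * mat_adjoint U) *\<^sub>v col U i = complex_of_real (f i) \<cdot>\<^sub>v col U i"
proof -
  have "(U * dmat n f * mat_adjoint U) * U = U * dmat n f * (mat_adjoint U * U)"
    using U by (simp add: assoc_mult_mat[of _ n n _ n _ n] mult_carrier_mat[of _ n n _ n] del: assoc_mult_mat)
  also have "\<dots> = U * dmat n f" unfolding UU using U by simp
  finally have e: "(U * dmat n f * mat_adjoint U) * U = U * dmat n f" .
  have "(U * dmat n f * mat_adjoint U) *\<^sub>v col U i = col ((U * dmat n f * mat_adjoint U) * U) i"
    using U i by (simp add: col_mult2[of _ n n _ n])
  also have "\<dots> = col (U * dmat n f) i" unfolding e ..
  also have "\<dots> = complex_of_real (f i) \<cdot>\<^sub>v col U i"
  proof (rule eq_vecI)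
    fix j assume "j < dim_vec (complex_of_real (f i) \<cdot>\<^sub>v col U i)"
    hence j: "j < n" using U by simp
    have "(U * dmat n f) $$ (j, i) = (\<Sum>k\<in>{0..<n}. U $$ (j,k) * (if k = i then complex_of_real (f k) else 0))"
      using U i j by (simp add: scalar_prod_def row_def col_def)
    also have "\<dots> = U $$ (j,i) * complex_of_real (f i)"
      using i by (simp add: if_distrib sum.delta' cong: if_cong)
    finally show "col (U * dmat n f) i $ j = (complex_of_real (f i) \<cdot>\<^sub>v col U i) $ j"
      using U i j by (simp add: mult.commute)
  qed (use U in simp)
  finally show ?thesis .
qed

lemma eig_val: assumes U: "(U :: complex mat) \<in> carrier_mat n n" and UU: "mat_adjoint U * U = 1\<^sub>m n" and i: "i < n"
  shows "((U * dmat n f * mat_adjoint U) *\<^sub>v col U i) \<bullet>c col U i = complex_of_real (f i)"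
  unfolding eigvec[OF U UU i] using cscalar_smult_left[of "col U i" n] U i unit_col[OF U UU i] by simp

lemma sum_list_take: "k \<le> length xs \<Longrightarrow> sum_list (take k xs) = (\<Sum>i<k. xs ! i)"
  by (simp add: sum_list_sum_nth atLeast0LessThan min_def)

lemma sorted_rev_nth: assumes "sorted (rev xs)" "i \<le> j" "j < length xs"
  shows "xs ! j \<le> (xs ! i :: real)"
proof -
  have "rev xs ! (length xs - 1 - j) \<le> rev xs ! (length xs - 1 - i)"
    using assms by (intro sorted_nth_mono) auto
  thus ?thesis using assms by (simp add: rev_nth)
qed

lemma nsq_zero: assumes "v \<in> carrier_vec n" "nsq v = 0" shows "v = 0\<^sub>v n"
  using assms conjugate_square_eq_0_vec[OF assms(1)] cscalar_self_real[of v] unfolding nsq_def by simp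

lemma abel_identity: fixes lam e :: "nat \<Rightarrow> real"
  shows "(\<Sum>l<m. lam l * e l) = (\<Sum>p<m. (lam p - lam (Suc p)) * (\<Sum>l<Suc p. e l)) + lam m * (\<Sum>l<m. e l)"
  by (induction m) (simp_all add: algebra_simps)

lemma abel_nonneg: fixes lam e :: "nat \<Rightarrow> real"
  assumes mono: "\<And>i j. i \<le> j \<Longrightarrow> j < n \<Longrightarrow> lam j \<le> lam i" and nn: "\<And>i. i < n \<Longrightarrow> 0 \<le> lam i"
    and E: "\<And>p. p \<le> n \<Longrightarrow> 0 \<le> (\<Sum>l<p. e l)"
  shows "0 \<le> (\<Sum>l<n. lam l * e l)"
proof -
  define lam' where "lam' = (\<lambda>i. if i < n then lam i else 0)"
  have "(\<Sum>l<n. lam l * e l) = (\<Sum>l<n. lam' l * e l)" unfolding lam'_def by simp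
  also have "\<dots> = (\<Sum>p<n. (lam' p - lam' (Suc p)) * (\<Sum>l<Suc p. e l)) + lam' n * (\<Sum>l<n. e l)"
    by (rule abel_identity)
  also have "\<dots> \<ge> 0"
  proof -
    have "(\<Sum>p<n. (lam' p - lam' (Suc p)) * (\<Sum>l<Suc p. e l)) \<ge> 0"
    proof (rule sum_nonneg)
      fix p assume p: "p \<in> {..<n}"
      have "lam' (Suc p) \<le> lam' p" unfolding lam'_def using p mono nn by auto
      thus "0 \<le> (lam' p - lam' (Suc p)) * (\<Sum>l<Suc p. e l)" using E[of "Suc p"] p by simp
    qed
    thus ?thesis unfolding lam'_def by simp
  qed
  finally show ?thesis .
qed

lemma abel: fixes lam r :: "nat \<Rightarrow> real"
  assumes mono: "\<And>i j. i \<le> j \<Longrightarrow> j < n \<Longrightarrow> lam j \<le> lam i" and nn: "\<And>i. i < n \<Longrightarrow> 0 \<le> lam i"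
    and R: "\<And>p. p \<le> n \<Longrightarrow> (\<Sum>l<p. r l) \<le> F * min p k" and k: "k \<le> n"
  shows "(\<Sum>l<n. lam l * r l) \<le> F * (\<Sum>l<k. lam l)"
proof -
  define d where "d = (\<lambda>l. if l < k then F else 0)"
  have dsum: "(\<Sum>l<p. d l) = F * min p k" for p
  proof -
    have "(\<Sum>l<p. d l) = (\<Sum>l\<in>{..<min p k}. F)" unfolding d_def
      by (rule sum.mono_neutral_cong_right) auto
    thus ?thesis by simp
  qed
  have "0 \<le> (\<Sum>l<n. lam l * (d l - r l))"
  proof (rule abel_nonneg[OF mono nn])
    fix p assume "p \<le> n"
    thus "0 \<le> (\<Sum>l<p. d l - r l)" using R[of p] dsum[of p] by (simp add: sum_subtractf)
  qed auto
  hence "(\<Sum>l<n. lam l * r l) \<le> (\<Sum>l<n. lam l * d l)" by (simp add: algebra_simps sum_subtractf)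
  also have "(\<Sum>l<n. lam l * d l) = (\<Sum>l<k. F * lam l)" unfolding d_def
    using k by (intro sum.mono_neutral_cong_right) auto
  finally show ?thesis by (simp add: sum_distrib_left)
qed

lemma cscalar_smult_right: assumes "v \<in> carrier_vec n" "w \<in> carrier_vec n"
  shows "(v :: complex vec) \<bullet>c (c \<cdot>\<^sub>v w) = cnj c * (v \<bullet>c w)"
  using cscalar_smult[OF assms, of 1 c] by simp

lemma nsq_unitary: assumes U: "(U :: complex mat) \<in> carrier_mat n n" and UU': "U * mat_adjoint U = 1\<^sub>m n"
  and y: "y \<in> carrier_vec n"
  shows "nsq y = (\<Sum>i<n. (cmod ((mat_adjoint U *\<^sub>v y) $ i))^2)"
proof -
  have "U * dmat n (\<lambda>_. 1) * mat_adjoint U = 1\<^sub>m n" using U UU' by (simp add: dmat_one)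
  hence "y \<bullet>c y = (\<Sum>i<n. complex_of_real (1 * (cmod ((mat_adjoint U *\<^sub>v y) $ i))^2))"
    using qf[OF U y, of "\<lambda>_. 1"] y by simp
  thus ?thesis unfolding nsq_def by (simp add: Re_sum)
qed

lemma kant_mat:
  assumes U: "(U :: complex mat) \<in> carrier_mat n n" and UU: "mat_adjoint U * U = 1\<^sub>m n"
    and UU': "U * mat_adjoint U = 1\<^sub>m n"
    and z: "\<And>i. i < n \<Longrightarrow> b \<le> z i \<and> z i \<le> a" and b: "0 < b" and ba: "b \<le> a"
    and u: "u \<in> carrier_vec n"
  shows "nsq u * nsq ((U * dmat n z * mat_adjoint U) *\<^sub>v u) \<le>
    (a+b)^2 / (4*a*b) * (Re (u \<bullet>c ((U * dmat n z * mat_adjoint U) *\<^sub>v u)))^2"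
proof -
  define Z where "Z = U * dmat n z * mat_adjoint U"
  have Z: "Z \<in> carrier_mat n n" unfolding Z_def using U by simp
  define g where "g = mat_adjoint U *\<^sub>v u"
  define p where "p = (\<lambda>i. (cmod (g $ i))^2)"
  have p0: "\<And>i. p i \<ge> 0" unfolding p_def by simp
  have n1: "nsq u = (\<Sum>i<n. p i)" unfolding p_def g_def by (rule nsq_unitary[OF U UU' u])
  have "u \<bullet>c (Z *\<^sub>v u) = (\<Sum>i<n. complex_of_real (z i * p i))"
    unfolding Z_def p_def g_def by (rule qf[OF U u])
  hence n2: "Re (u \<bullet>c (Z *\<^sub>v u)) = (\<Sum>i<n. p i * z i)" by (simp add: Re_sum mult.commute)
  have "nsq (Z *\<^sub>v u) = Re (u \<bullet>c (mat_adjoint Z *\<^sub>v (Z *\<^sub>v u)))"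
    unfolding nsq_def using adj_cscalar[OF Z u, of "Z *\<^sub>v u"] Z u by simp
  also have "mat_adjoint Z *\<^sub>v (Z *\<^sub>v u) = (Z * Z) *\<^sub>v u"
    unfolding Z_def fc_adj[OF U] using U u by (simp add: assoc_mult_mat_vec[of _ n n _ n] del: assoc_mult_mat_vec)
  also have "Z * Z = U * dmat n (\<lambda>i. z i * z i) * mat_adjoint U"
    unfolding Z_def by (rule fc_mult[OF U UU])
  also have "Re (u \<bullet>c ((U * dmat n (\<lambda>i. z i * z i) * mat_adjoint U) *\<^sub>v u)) = (\<Sum>i<n. p i * (z i)^2)"
    unfolding qf[OF U u] p_def g_def by (simp add: Re_sum power2_eq_square mult.commute)
  finally have n3: "nsq (Z *\<^sub>v u) = (\<Sum>i<n. p i * (z i)^2)" .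
  show ?thesis unfolding Z_def[symmetric] n1 n2 n3
    by (rule kant_scalar[OF _ p0 z b ba]) auto
qed

lemma adj_mv_carrier[simp]: "(A :: complex mat) \<in> carrier_mat n m \<Longrightarrow> v \<in> carrier_vec n \<Longrightarrow> mat_adjoint A *\<^sub>v v \<in> carrier_vec m"
  by (rule mult_mat_vec_carrier[OF adj_carrier])

theorem corollary1p3:
  fixes n :: nat and A Z :: "complex mat" and a b :: real
  assumes "psd_mat n A" and "pd_mat n Z"
    and "a = hd (Eig Z)" and "b = last (Eig Z)"
  shows "\<forall>k \<in> {1..n}.
    sum_list (take k (Sing (A * Z))) \<le> (a + b) / (2 * sqrt (a * b)) * sum_list (take k (Eig (A * Z)))"
proof (intro ballI)
  fix k assume "k \<in> {1..n}"
  hence k1: "1 \<le> k" and kn: "k \<le> n" by auto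
  hence n0: "0 < n" by simp
  have A: "A \<in> carrier_mat n n" and Ah: "mat_adjoint A = A"
    and Apsd: "\<And>v. v \<in> carrier_vec n \<Longrightarrow> 0 \<le> (A *\<^sub>v v) \<bullet>c v"
    using assms(1) unfolding psd_mat_def hermitian_mat_def by auto
  have Z: "Z \<in> carrier_mat n n" and Zh: "mat_adjoint Z = Z"
    and Zpd: "\<And>v. v \<in> carrier_vec n \<Longrightarrow> v \<noteq> 0\<^sub>v n \<Longrightarrow> 0 < (Z *\<^sub>v v) \<bullet>c v"
    using assms(2) unfolding pd_mat_def hermitian_mat_def by auto
  obtain UZ zs where UZ: "UZ \<in> carrier_mat n n" and UZU: "mat_adjoint UZ * UZ = 1\<^sub>m n"
    and UZU': "UZ * mat_adjoint UZ = 1\<^sub>m n" and lzs: "length zs = n" and szs: "sorted (rev zs)"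
    and Zd: "Z = UZ * dmat n ((!) zs) * mat_adjoint UZ"
    using spectral_sorted[OF Z Zh] by blast
  have EigZ: "Eig Z = zs" by (rule Eig_similar[OF Z UZ adj_carrier[OF UZ] UZU' UZU Zd lzs szs])
  have ha: "a = zs ! 0" using assms(3) EigZ lzs n0 by (cases zs) auto
  have hb: "b = zs ! (n - 1)"
  proof -
    have "zs \<noteq> []" using lzs n0 by auto
    thus ?thesis using assms(4) EigZ lzs by (simp add: last_conv_nth)
  qed
  have zpos: "0 < zs ! i" if i: "i < n" for i
  proof -
    have "col UZ i \<noteq> 0\<^sub>v n" using unit_col[OF UZ UZU i] UZ i by auto
    hence "0 < (Z *\<^sub>v col UZ i) \<bullet>c col UZ i" using Zpd UZ i by simp
    thus ?thesis unfolding Zd eig_val[OF UZ UZU i] by (simp add: less_complex_def)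
  qed
  have zab: "b \<le> zs ! i \<and> zs ! i \<le> a" if i: "i < n" for i
    unfolding ha hb using sorted_rev_nth[OF szs, of 0 i] sorted_rev_nth[OF szs, of i "n-1"] i lzs by auto
  have zne: "zs ! i \<noteq> 0" if "i < n" for i using zpos[OF that] by simp
  have b0: "0 < b" unfolding hb using zpos n0 by simp
  have ba: "b \<le> a" using zab[OF n0] by simp
  define F where "F = (a + b) / (2 * sqrt (a * b))"
  have F0: "0 \<le> F" unfolding F_def using b0 ba by simp
  have F2: "F^2 = (a+b)^2 / (4*a*b)" unfolding F_def using b0 ba
    by (simp add: power_divide power_mult_distrib)
  have kant: "nsq u * nsq (Z *\<^sub>v u) \<le> F^2 * (Re (u \<bullet>c (Z *\<^sub>v u)))^2" if u: "u \<in> carrier_vec n" for u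
    unfolding F2 Zd by (rule kant_mat[OF UZ UZU UZU' zab b0 ba u])
  define B where "B = UZ * dmat n (\<lambda>i. sqrt (zs ! i)) * mat_adjoint UZ"
  define Bi where "Bi = UZ * dmat n (\<lambda>i. 1 / sqrt (zs ! i)) * mat_adjoint UZ"
  have B: "B \<in> carrier_mat n n" and Bi: "Bi \<in> carrier_mat n n" unfolding B_def Bi_def using UZ by auto
  have Bh: "mat_adjoint B = B" unfolding B_def by (rule fc_adj[OF UZ])
  have BB: "B * B = Z" unfolding B_def Zd fc_mult[OF UZ UZU]
    using zpos by (intro arg_cong2[where f = "(*)"] arg_cong2[where f = "(*)"] dmat_cong refl) (simp add: less_imp_le)
  have one: "UZ * dmat n (\<lambda>_. 1) * mat_adjoint UZ = 1\<^sub>m n" using UZ UZU' by (simp add: dmat_one)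
  have BBi: "B * Bi = 1\<^sub>m n" unfolding B_def Bi_def fc_mult[OF UZ UZU] one[symmetric]
    using zpos zne by (intro arg_cong2[where f = "(*)"] arg_cong2[where f = "(*)"] dmat_cong refl)
      (simp add: less_imp_le field_simps)
  have BiB: "Bi * B = 1\<^sub>m n" unfolding B_def Bi_def fc_mult[OF UZ UZU] one[symmetric]
    using zpos zne by (intro arg_cong2[where f = "(*)"] arg_cong2[where f = "(*)"] dmat_cong refl)
      (simp add: less_imp_le field_simps)
  define H where "H = B * A * B"
  have H: "H \<in> carrier_mat n n" unfolding H_def using A B by simp
  have Hh: "mat_adjoint H = H"
  proof -
    have "mat_adjoint H = mat_adjoint B * mat_adjoint (B * A)"
      unfolding H_def by (rule adj_mult[of _ n n _ n]) (use A B in auto)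
    also have "mat_adjoint (B * A) = mat_adjoint A * mat_adjoint B"
      by (rule adj_mult[of _ n n _ n]) (use A B in auto)
    finally show ?thesis unfolding H_def Ah Bh using A B by (simp add: assoc_mult_mat[of _ n n _ n _ n] mult_carrier_mat[of _ n n _ n] del: assoc_mult_mat)
  qed
  have Hpsd: "0 \<le> (H *\<^sub>v v) \<bullet>c v" if v: "v \<in> carrier_vec n" for v
  proof -
    have "H *\<^sub>v v = B *\<^sub>v (A *\<^sub>v (B *\<^sub>v v))" unfolding H_def using A B v
      by (simp add: assoc_mult_mat_vec[of _ n n _ n] mult_carrier_mat[of _ n n _ n] mult_mat_vec_carrier[of _ n n] del: assoc_mult_mat_vec)
    hence "(H *\<^sub>v v) \<bullet>c v = (A *\<^sub>v (B *\<^sub>v v)) \<bullet>c (B *\<^sub>v v)"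
      using adj_cscalar[OF B _ v, of "A *\<^sub>v (B *\<^sub>v v)"] A B v Bh by simp
    thus ?thesis using Apsd[of "B *\<^sub>v v"] B v by simp
  qed
  obtain V lam where V: "V \<in> carrier_mat n n" and VV: "mat_adjoint V * V = 1\<^sub>m n"
    and VV': "V * mat_adjoint V = 1\<^sub>m n" and llam: "length lam = n" and slam: "sorted (rev lam)"
    and Hd: "H = V * dmat n ((!) lam) * mat_adjoint V"
    using spectral_sorted[OF H Hh] by blast
  have lam0: "0 \<le> lam ! l" if l: "l < n" for l
  proof -
    have "0 \<le> (H *\<^sub>v col V l) \<bullet>c col V l" using Hpsd V l by simp
    thus ?thesis unfolding Hd eig_val[OF V VV l] by (simp add: less_eq_complex_def)
  qed
  have lammono: "lam ! j \<le> lam ! i" if "i \<le> j" "j < n" for i j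
    using sorted_rev_nth[OF slam] that llam by simp
  define X where "X = A * Z"
  have X: "X \<in> carrier_mat n n" unfolding X_def using A Z by simp
  define Xm where "Xm = Bi * V"
  define Ym where "Ym = B * V"
  have Xm: "Xm \<in> carrier_mat n n" and Ym: "Ym \<in> carrier_mat n n" unfolding Xm_def Ym_def using Bi B V by auto
  have adjYm: "mat_adjoint Ym = mat_adjoint V * B" unfolding Ym_def using adj_mult[OF B V] Bh by simp
  have Xd: "X = Xm * dmat n ((!) lam) * mat_adjoint Ym"
  proof -
    have "Xm * dmat n ((!) lam) * mat_adjoint Ym = Bi * (V * dmat n ((!) lam) * mat_adjoint V) * B"
      unfolding adjYm Xm_def using Bi V B by (simp add: assoc_mult_mat[of _ n n _ n _ n] mult_carrier_mat[of _ n n _ n] del: assoc_mult_mat)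
    also have "\<dots> = (Bi * B) * A * (B * B)" unfolding Hd[symmetric] H_def using Bi B A by (simp add: assoc_mult_mat[of _ n n _ n _ n] mult_carrier_mat[of _ n n _ n] del: assoc_mult_mat)
    also have "\<dots> = X" unfolding BiB BB X_def using A Z by simp
    finally show ?thesis by simp
  qed
  have YX: "mat_adjoint Ym * Xm = 1\<^sub>m n"
  proof -
    have "mat_adjoint Ym * Xm = mat_adjoint V * (B * Bi) * V" unfolding adjYm Xm_def using V B Bi by (simp add: assoc_mult_mat[of _ n n _ n _ n] mult_carrier_mat[of _ n n _ n] del: assoc_mult_mat)
    thus ?thesis unfolding BBi using VV V by simp
  qed
  have XY: "Xm * mat_adjoint Ym = 1\<^sub>m n"
  proof -
    have "Xm * mat_adjoint Ym = Bi * (V * mat_adjoint V) * B" unfolding adjYm Xm_def using V B Bi by (simp add: assoc_mult_mat[of _ n n _ n _ n] mult_carrier_mat[of _ n n _ n] del: assoc_mult_mat)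
    thus ?thesis unfolding VV' using BiB Bi by simp
  qed
  have EigX: "Eig X = lam" by (rule Eig_similar[OF X Xm adj_carrier[OF Ym] XY YX Xd llam slam])
  define M where "M = mat_adjoint X * X"
  have M: "M \<in> carrier_mat n n" unfolding M_def using mult_carrier_mat[OF adj_carrier[OF X] X] .
  have Mh: "mat_adjoint M = M" unfolding M_def using adj_mult[of "mat_adjoint X" n n X n] X by simp
  obtain W mu where W: "W \<in> carrier_mat n n" and WW: "mat_adjoint W * W = 1\<^sub>m n"
    and WW': "W * mat_adjoint W = 1\<^sub>m n" and lmu: "length mu = n" and smu: "sorted (rev mu)"
    and Md: "M = W * dmat n ((!) mu) * mat_adjoint W"
    using spectral_sorted[OF M Mh] by blast
  have EigM: "Eig M = mu" by (rule Eig_similar[OF M W adj_carrier[OF W] WW' WW Md lmu smu])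
  have nsqX: "nsq (X *\<^sub>v v) = Re (v \<bullet>c (M *\<^sub>v v))" if v: "v \<in> carrier_vec n" for v
    unfolding nsq_def M_def using adj_cscalar[OF X v, of "X *\<^sub>v v"] X v by (simp add: assoc_mult_mat_vec[of _ n n _ n] mult_carrier_mat[of _ n n _ n] mult_mat_vec_carrier[of _ n n] del: assoc_mult_mat_vec)
  have mu0: "0 \<le> mu ! j" and nsqXw: "nsq (X *\<^sub>v col W j) = mu ! j" if j: "j < n" for j
  proof -
    have "col W j \<bullet>c (M *\<^sub>v col W j) = complex_of_real (mu ! j)"
      unfolding Md eigvec[OF W WW j] using cscalar_smult_right[of "col W j" n] W j unit_col[OF W WW j] by simp
    hence "nsq (X *\<^sub>v col W j) = mu ! j" using nsqX[of "col W j"] W j by simp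
    thus "nsq (X *\<^sub>v col W j) = mu ! j" "0 \<le> mu ! j" using nsq_nonneg[of "X *\<^sub>v col W j"] by auto
  qed
  have goal: "(\<Sum>j<k. sqrt (mu ! j)) \<le> F * (\<Sum>l<k. lam ! l)"
  proof -
    define sg where "sg = (\<lambda>j. if j < k \<and> 0 < mu ! j then 1 / sqrt (mu ! j) else 0)"
    have sg0: "0 \<le> sg j" for j unfolding sg_def by simp
    define G where "G = W * dmat n sg * mat_adjoint W"
    have G: "G \<in> carrier_mat n n" unfolding G_def using W by simp
    have Gh: "mat_adjoint G = G" unfolding G_def by (rule fc_adj[OF W])
    have GM: "G * M = W * dmat n (\<lambda>j. sg j * mu ! j) * mat_adjoint W"
      unfolding G_def Md by (rule fc_mult[OF W WW])
    have GMG: "G * M * G = W * dmat n (\<lambda>j. sg j * mu ! j * sg j) * mat_adjoint W"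
      unfolding GM unfolding G_def by (rule fc_mult[OF W WW])
    have trconj: "mtrace (W * dmat n f * mat_adjoint W) = (\<Sum>i<n. complex_of_real (f i))" for f
    proof -
      have "mtrace (W * dmat n f * mat_adjoint W) = mtrace (W * (dmat n f * mat_adjoint W))"
        using W by (simp add: assoc_mult_mat[of _ n n _ n _ n] mult_carrier_mat[of _ n n _ n] del: assoc_mult_mat)
      also have "\<dots> = mtrace ((dmat n f * mat_adjoint W) * W)"
        by (rule mtrace_comm[of _ n n]) (use W in auto)
      also have "(dmat n f * mat_adjoint W) * W = dmat n f * (mat_adjoint W * W)"
        using W by (simp add: assoc_mult_mat[of _ n n _ n _ n] mult_carrier_mat[of _ n n _ n] del: assoc_mult_mat)
      finally show ?thesis unfolding WW by (simp add: trace_dmat)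
    qed
    have fact1: "(\<Sum>j<k. sqrt (mu ! j)) = Re (mtrace (G * M))"
    proof -
      have "Re (mtrace (G * M)) = (\<Sum>j<n. sg j * mu ! j)" unfolding GM trconj by (simp add: Re_sum)
      also have "\<dots> = (\<Sum>j<n. if j < k then sqrt (mu ! j) else 0)"
      proof (intro sum.cong refl)
        fix j assume "j \<in> {..<n}"
        hence j: "j < n" by simp
        show "sg j * mu ! j = (if j < k then sqrt (mu ! j) else 0)"
        proof (cases "0 < mu ! j")
          case True thus ?thesis unfolding sg_def by (simp add: real_div_sqrt)
        next
          case False hence "mu ! j = 0" using mu0[OF j] by simp
          thus ?thesis unfolding sg_def by simp
        qed
      qed
      also have "\<dots> = (\<Sum>j<k. sqrt (mu ! j))"
        using kn by (intro sum.mono_neutral_cong_right) auto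
      finally show ?thesis by simp
    qed
    define C where "C = mat_adjoint Ym * (G * mat_adjoint X) * Xm"
    have GX: "G * mat_adjoint X \<in> carrier_mat n n" using G X by simp
    have C: "C \<in> carrier_mat n n" unfolding C_def using Ym GX Xm by (simp add: mult_carrier_mat[of _ n n _ n])
    have fact2: "mtrace (G * M) = (\<Sum>l<n. C $$ (l,l) * complex_of_real (lam ! l))"
    proof -
      have "G * M = (G * mat_adjoint X * Xm * dmat n ((!) lam)) * mat_adjoint Ym"
        unfolding M_def using G X Xm Ym by (subst (2) Xd) (simp add: assoc_mult_mat[of _ n n _ n _ n] mult_carrier_mat[of _ n n _ n] del: assoc_mult_mat)
      hence "mtrace (G * M) = mtrace (mat_adjoint Ym * (G * mat_adjoint X * Xm * dmat n ((!) lam)))"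
        using mtrace_comm[of "G * mat_adjoint X * Xm * dmat n ((!) lam)" n n "mat_adjoint Ym"] G X Xm Ym
        by (simp add: assoc_mult_mat[of _ n n _ n _ n] mult_carrier_mat[of _ n n _ n] del: assoc_mult_mat)
      also have "mat_adjoint Ym * (G * mat_adjoint X * Xm * dmat n ((!) lam)) = C * dmat n ((!) lam)"
        unfolding C_def using G X Xm Ym by (simp add: assoc_mult_mat[of _ n n _ n _ n] mult_carrier_mat[of _ n n _ n] del: assoc_mult_mat)
      finally show ?thesis using trace_dmat_right[OF C] by simp
    qed
    have Cll: "C $$ (l,l) = col Xm l \<bullet>c (X *\<^sub>v (G *\<^sub>v col Ym l))" if l: "l < n" for l
    proof -
      have x: "col Xm l \<in> carrier_vec n" and y: "col Ym l \<in> carrier_vec n" using Xm Ym l by auto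
      have "C $$ (l,l) = ((G * mat_adjoint X) *\<^sub>v col Xm l) \<bullet>c col Ym l"
        unfolding C_def by (rule quad2[OF Ym GX Xm l l])
      also have "(G * mat_adjoint X) *\<^sub>v col Xm l = G *\<^sub>v (mat_adjoint X *\<^sub>v col Xm l)"
        using G X x by (simp add: assoc_mult_mat_vec[of _ n n _ n] mult_carrier_mat[of _ n n _ n] mult_mat_vec_carrier[of _ n n] del: assoc_mult_mat_vec)
      also have "(G *\<^sub>v (mat_adjoint X *\<^sub>v col Xm l)) \<bullet>c col Ym l = (mat_adjoint X *\<^sub>v col Xm l) \<bullet>c (G *\<^sub>v col Ym l)"
        using adj_cscalar[OF G mult_mat_vec_carrier[OF adj_carrier[OF X] x] y] Gh by simp
      also have "\<dots> = col Xm l \<bullet>c (X *\<^sub>v (G *\<^sub>v col Ym l))"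
        using adj_cscalar[OF adj_carrier[OF X] x mult_mat_vec_carrier[OF G y]] by simp
      finally show ?thesis .
    qed
    have ZXm: "Z * Xm = Ym"
    proof -
      have "Z * Xm = B * (B * Bi) * V" unfolding BB[symmetric] Xm_def using B Bi V by (simp add: assoc_mult_mat[of _ n n _ n _ n] mult_carrier_mat[of _ n n _ n] del: assoc_mult_mat)
      thus ?thesis unfolding BBi Ym_def using B by simp
    qed
    have boundA: "cmod (C $$ (l,l)) \<le> F" if l: "l < n" for l
    proof -
      define x where "x = col Xm l"
      define y where "y = col Ym l"
      have x: "x \<in> carrier_vec n" and y: "y \<in> carrier_vec n" unfolding x_def y_def using Xm Ym l by auto
      have Zx: "Z *\<^sub>v x = y" unfolding x_def y_def ZXm[symmetric] by (rule col_mult2[OF Z Xm l, symmetric])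
      have xy: "x \<bullet>c y = 1"
        using quad2[OF Ym one_carrier_mat Xm l l] YX l x right_mult_one_mat[OF adj_carrier[OF Ym]] unfolding x_def y_def by simp
      have k1: "nsq x * nsq y \<le> F^2"
        using kant[OF x] unfolding Zx xy by simp
      have Gy: "G *\<^sub>v y \<in> carrier_vec n" using G y by simp
      have "nsq (X *\<^sub>v (G *\<^sub>v y)) = Re ((G *\<^sub>v y) \<bullet>c (M *\<^sub>v (G *\<^sub>v y)))" by (rule nsqX[OF Gy])
      also have "(G *\<^sub>v y) \<bullet>c (M *\<^sub>v (G *\<^sub>v y)) = y \<bullet>c (G *\<^sub>v (M *\<^sub>v (G *\<^sub>v y)))"
        using adj_cscalar[OF G y mult_mat_vec_carrier[OF M Gy]] Gh by simp
      also have "G *\<^sub>v (M *\<^sub>v (G *\<^sub>v y)) = (G * M * G) *\<^sub>v y"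
        using G M y by (simp add: assoc_mult_mat_vec[of _ n n _ n] mult_carrier_mat[of _ n n _ n] mult_mat_vec_carrier[of _ n n] del: assoc_mult_mat_vec)
      also have "y \<bullet>c ((G * M * G) *\<^sub>v y) = (\<Sum>i<n. complex_of_real (sg i * mu ! i * sg i * (cmod ((mat_adjoint W *\<^sub>v y) $ i))^2))"
        unfolding GMG by (rule qf[OF W y])
      finally have "nsq (X *\<^sub>v (G *\<^sub>v y)) = (\<Sum>i<n. sg i * mu ! i * sg i * (cmod ((mat_adjoint W *\<^sub>v y) $ i))^2)"
        by (simp add: Re_sum)
      also have "\<dots> \<le> (\<Sum>i<n. (cmod ((mat_adjoint W *\<^sub>v y) $ i))^2)"
      proof (rule sum_mono)
        fix i assume "i \<in> {..<n}"
        have "sg i * mu ! i * sg i \<le> 1" unfolding sg_def by (auto simp: power2_eq_square[symmetric])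
        moreover have "sg i * mu ! i * sg i \<ge> 0" unfolding sg_def by auto
        ultimately show "sg i * mu ! i * sg i * (cmod ((mat_adjoint W *\<^sub>v y) $ i))^2 \<le> (cmod ((mat_adjoint W *\<^sub>v y) $ i))^2"
          by (simp add: mult_left_le_one_le)
      qed
      also have "\<dots> = nsq y" by (rule nsq_unitary[OF W WW' y, symmetric])
      finally have nXGy: "nsq (X *\<^sub>v (G *\<^sub>v y)) \<le> nsq y" .
      have "(cmod (C $$ (l,l)))^2 \<le> nsq x * nsq (X *\<^sub>v (G *\<^sub>v y))"
        unfolding Cll[OF l] x_def[symmetric] y_def[symmetric]
        by (rule cs[OF x]) (use X Gy in simp)
      also have "\<dots> \<le> nsq x * nsq y" using nXGy nsq_nonneg[of x] by (rule mult_left_mono)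
      also have "\<dots> \<le> F^2" by (rule k1)
      finally show ?thesis using F0 by (rule power2_le_imp_le)
    qed
    (* norm bound for the oblique projections *)
    have Qbound: "nsq ((Xm * dmat n e * mat_adjoint Ym) *\<^sub>v w) \<le> F^2 * nsq w"
      if w: "w \<in> carrier_vec n" and e01: "\<And>i. e i = 0 \<or> e i = 1" for w e
    proof -
      define d where "d = mat_adjoint Ym *\<^sub>v w"
      have d: "d \<in> carrier_vec n" unfolding d_def using Ym w by simp
      define cc where "cc = dmat n e *\<^sub>v d"
      have cc: "cc \<in> carrier_vec n" unfolding cc_def using d by simp
      define u where "u = (Xm * dmat n e * mat_adjoint Ym) *\<^sub>v w"
      have uc: "u = Xm *\<^sub>v cc" unfolding u_def cc_def d_def using Xm Ym w by (simp add: assoc_mult_mat_vec[of _ n n _ n] mult_carrier_mat[of _ n n _ n] mult_mat_vec_carrier[of _ n n] del: assoc_mult_mat_vec)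
      have u: "u \<in> carrier_vec n" unfolding uc using Xm cc by simp
      have Zu: "Z *\<^sub>v u = Ym *\<^sub>v cc" unfolding uc ZXm[symmetric] using Z Xm cc by (simp add: assoc_mult_mat_vec[of _ n n _ n] mult_carrier_mat[of _ n n _ n] mult_mat_vec_carrier[of _ n n] del: assoc_mult_mat_vec)
      have Zuc: "Z *\<^sub>v u \<in> carrier_vec n" using Z u by simp
      define t where "t = (\<Sum>i<n. e i * (cmod (d $ i))^2)"
      have t0: "0 \<le> t" unfolding t_def using e01 by (intro sum_nonneg) (metis mult_nonneg_nonneg order_refl zero_le_one zero_le_power2)
      have XY1: "mat_adjoint Xm * Ym = 1\<^sub>m n"
      proof -
        have "mat_adjoint (mat_adjoint Ym * Xm) = mat_adjoint Xm * mat_adjoint (mat_adjoint Ym)"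
          by (rule adj_mult[of _ n n _ n]) (use Xm Ym in auto)
        thus ?thesis unfolding YX by simp
      qed
      have ccc: "cc \<bullet>c cc = complex_of_real t"
      proof -
        have "cc \<bullet>c cc = (\<Sum>i<n. complex_of_real ((e i)^2 * (cmod (d $ i))^2))"
          unfolding cc_def by (rule dmat_cscalar2[OF d])
        also have "\<dots> = complex_of_real t" unfolding t_def of_real_sum
          using e01 by (intro sum.cong refl) (metis power2_eq_square mult_1 mult_zero_left)
        finally show ?thesis .
      qed
      have t1: "u \<bullet>c (Z *\<^sub>v u) = complex_of_real t"
      proof -
        have "u \<bullet>c (Z *\<^sub>v u) = cc \<bullet>c (mat_adjoint Xm *\<^sub>v (Ym *\<^sub>v cc))"
          unfolding Zu unfolding uc by (rule adj_cscalar[OF Xm cc]) (use Ym cc in simp)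
        also have "mat_adjoint Xm *\<^sub>v (Ym *\<^sub>v cc) = cc"
          using assoc_mult_mat_vec[OF adj_carrier[OF Xm] Ym cc] XY1 cc by simp
        finally show ?thesis unfolding ccc .
      qed
      have t2: "(Z *\<^sub>v u) \<bullet>c w = complex_of_real t"
      proof -
        have "(Z *\<^sub>v u) \<bullet>c w = cc \<bullet>c d" unfolding Zu d_def by (rule adj_cscalar[OF Ym cc w])
        also have "\<dots> = complex_of_real t" unfolding cc_def dmat_cscalar[OF d] t_def of_real_sum ..
        finally show ?thesis .
      qed
      have kantu: "nsq u * nsq (Z *\<^sub>v u) \<le> F^2 * t^2" using kant[OF u] unfolding t1 by simp
      have csu: "t^2 \<le> nsq (Z *\<^sub>v u) * nsq w" using cs[OF Zuc w] unfolding t2 by simp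
      show ?thesis
      proof (cases "nsq (Z *\<^sub>v u) = 0")
        case True
        hence "t^2 \<le> 0" using csu by simp
        hence "t = 0" by simp
        hence "nsq cc = 0" unfolding nsq_def ccc by simp
        hence "cc = 0\<^sub>v n" by (rule nsq_zero[OF cc])
        hence "u = 0\<^sub>v n" unfolding uc using Xm by (intro eq_vecI) (auto simp: scalar_prod_def)
        hence "nsq u = 0" unfolding nsq_def by simp
        thus ?thesis unfolding u_def using nsq_nonneg[of w] by simp
      next
        case False
        hence pos: "0 < nsq (Z *\<^sub>v u)" using nsq_nonneg[of "Z *\<^sub>v u"] by simp
        have "nsq u * nsq (Z *\<^sub>v u) \<le> (F^2 * nsq w) * nsq (Z *\<^sub>v u)"
          using kantu mult_left_mono[OF csu, of "F^2"] by (simp add: ac_simps)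
        thus ?thesis using pos unfolding u_def by simp
      qed
    qed
    have boundB: "cmod (\<Sum>l<p. C $$ (l,l)) \<le> F * k" if p: "p \<le> n" for p
    proof -
      define e where "e = (\<lambda>l. if l < p then 1 else 0 :: real)"
      have e01: "\<And>i. e i = 0 \<or> e i = 1" unfolding e_def by auto
      define Q where "Q = Xm * dmat n e * mat_adjoint Ym"
      have Q: "Q \<in> carrier_mat n n" unfolding Q_def using Xm Ym by (simp add: mult_carrier_mat[of _ n n _ n])
      have s1: "(\<Sum>l<p. C $$ (l,l)) = mtrace (C * dmat n e)"
      proof -
        have "mtrace (C * dmat n e) = (\<Sum>l<n. C $$ (l,l) * complex_of_real (e l))" by (rule trace_dmat_right[OF C])
        also have "\<dots> = (\<Sum>l<p. C $$ (l,l))" unfolding e_def using p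
          by (intro sum.mono_neutral_cong_right) auto
        finally show ?thesis by simp
      qed
      define T where "T = mat_adjoint (X * W) * Q * W"
      have T: "T \<in> carrier_mat n n" unfolding T_def using X W Q by (simp add: mult_carrier_mat[of _ n n _ n])
      have adjXW: "mat_adjoint (X * W) = mat_adjoint W * mat_adjoint X" by (rule adj_mult[OF X W])
      have s2: "mtrace (C * dmat n e) = mtrace (T * dmat n sg)"
      proof -
        have "C * dmat n e = mat_adjoint Ym * (G * mat_adjoint X * Xm * dmat n e)"
          unfolding C_def using Ym G X Xm by (simp add: assoc_mult_mat[of _ n n _ n _ n] mult_carrier_mat[of _ n n _ n] del: assoc_mult_mat)
        hence "mtrace (C * dmat n e) = mtrace ((G * mat_adjoint X * Xm * dmat n e) * mat_adjoint Ym)"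
          using mtrace_comm[of "mat_adjoint Ym" n n "G * mat_adjoint X * Xm * dmat n e"] Ym G X Xm
          by (simp add: mult_carrier_mat[of _ n n _ n])
        also have "(G * mat_adjoint X * Xm * dmat n e) * mat_adjoint Ym = W * (dmat n sg * (mat_adjoint W * mat_adjoint X * Q))"
          unfolding G_def Q_def using W X Xm Ym by (simp add: assoc_mult_mat[of _ n n _ n _ n] mult_carrier_mat[of _ n n _ n] del: assoc_mult_mat)
        also have "mtrace \<dots> = mtrace ((dmat n sg * (mat_adjoint W * mat_adjoint X * Q)) * W)"
          by (rule mtrace_comm[of _ n n]) (use W X Q in \<open>simp_all add: mult_carrier_mat[of _ n n _ n]\<close>)
        also have "(dmat n sg * (mat_adjoint W * mat_adjoint X * Q)) * W = dmat n sg * T"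
          unfolding T_def adjXW using W X Q by (simp add: assoc_mult_mat[of _ n n _ n _ n] mult_carrier_mat[of _ n n _ n] del: assoc_mult_mat)
        also have "mtrace (dmat n sg * T) = mtrace (T * dmat n sg)"
          by (rule mtrace_comm[of _ n n]) (use T in auto)
        finally show ?thesis .
      qed
      have s3: "mtrace (T * dmat n sg) = (\<Sum>j<n. T $$ (j,j) * complex_of_real (sg j))"
        by (rule trace_dmat_right[OF T])
      have Tjj: "T $$ (j,j) = (Q *\<^sub>v col W j) \<bullet>c (X *\<^sub>v col W j)" if j: "j < n" for j
      proof -
        have "T $$ (j,j) = (Q *\<^sub>v col W j) \<bullet>c col (X * W) j"
          unfolding T_def by (rule quad2[OF _ Q W j j]) (use X W in simp)
        thus ?thesis by (simp only: col_mult2[OF X W j])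
      qed
      have trm: "cmod (T $$ (j,j) * complex_of_real (sg j)) \<le> (if j < k then F else 0)" if j: "j < n" for j
      proof (cases "j < k \<and> 0 < mu ! j")
        case False
        hence "sg j = 0" unfolding sg_def by auto
        thus ?thesis using F0 by simp
      next
        case True
        hence sgj: "sg j = 1 / sqrt (mu ! j)" and jk: "j < k" and mpos: "0 < mu ! j" unfolding sg_def by auto
        have wj: "col W j \<in> carrier_vec n" using W j by simp
        have "(cmod (T $$ (j,j)))^2 \<le> nsq (Q *\<^sub>v col W j) * nsq (X *\<^sub>v col W j)"
          unfolding Tjj[OF j] by (rule cs[of _ n]) (use Q X wj in simp_all)
        also have "\<dots> \<le> (F^2 * nsq (col W j)) * mu ! j"
          unfolding nsqXw[OF j] using Qbound[of "col W j" e, OF wj e01, folded Q_def] mu0[OF j] by (rule mult_right_mono)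
        also have "nsq (col W j) = 1" unfolding nsq_def unit_col[OF W WW j] by simp
        finally have c2: "(cmod (T $$ (j,j)))^2 \<le> F^2 * mu ! j" by simp
        have nsg: "cmod (complex_of_real (sg j)) = sg j" using sg0[of j] by simp
        have "(cmod (T $$ (j,j) * complex_of_real (sg j)))^2 = (cmod (T $$ (j,j)))^2 * (sg j)^2"
          unfolding norm_mult nsg by (simp add: power_mult_distrib)
        also have "(sg j)^2 = 1 / mu ! j" unfolding sgj using mpos by (simp add: power_divide)
        finally have "(cmod (T $$ (j,j) * complex_of_real (sg j)))^2 = (cmod (T $$ (j,j)))^2 / mu ! j" by simp
        also have "\<dots> \<le> F^2" using c2 mpos by (simp add: divide_le_eq)
        finally have "cmod (T $$ (j,j) * complex_of_real (sg j)) \<le> F" using F0 by (rule power2_le_imp_le)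
        thus ?thesis using jk by simp
      qed
      have "cmod (\<Sum>l<p. C $$ (l,l)) = cmod (\<Sum>j<n. T $$ (j,j) * complex_of_real (sg j))"
        unfolding s1 s2 s3 ..
      also have "\<dots> \<le> (\<Sum>j<n. cmod (T $$ (j,j) * complex_of_real (sg j)))" by (rule norm_sum)
      also have "\<dots> \<le> (\<Sum>j<n. if j < k then F else 0)" by (rule sum_mono) (use trm in auto)
      also have "\<dots> = (\<Sum>j<k. F)" using kn by (intro sum.mono_neutral_cong_right) auto
      finally show ?thesis by (simp add: mult.commute)
    qed
    have R: "(\<Sum>l<p. Re (C $$ (l,l))) \<le> F * min (real p) (real k)" if p: "p \<le> n" for p
    proof -
      have "(\<Sum>l<p. Re (C $$ (l,l))) = Re (\<Sum>l<p. C $$ (l,l))" by (simp add: Re_sum)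
      also have "\<dots> \<le> cmod (\<Sum>l<p. C $$ (l,l))" by (rule complex_Re_le_cmod)
      finally have r1: "(\<Sum>l<p. Re (C $$ (l,l))) \<le> cmod (\<Sum>l<p. C $$ (l,l))" .
      have "cmod (\<Sum>l<p. C $$ (l,l)) \<le> (\<Sum>l<p. cmod (C $$ (l,l)))" by (rule norm_sum)
      also have "\<dots> \<le> (\<Sum>l<p. F)" by (rule sum_mono) (use boundA p in auto)
      finally have r2: "cmod (\<Sum>l<p. C $$ (l,l)) \<le> F * p" by (simp add: mult.commute)
      show ?thesis using r1 r2 boundB[OF p] by (cases "p \<le> k") (auto simp: min_def)
    qed
    have "(\<Sum>l<n. lam ! l * Re (C $$ (l,l))) \<le> F * (\<Sum>l<k. lam ! l)"
      by (rule abel[of n "\<lambda>l. lam ! l" "\<lambda>l. Re (C $$ (l,l))" F k, OF lammono lam0 R kn])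
    moreover have "Re (mtrace (G * M)) = (\<Sum>l<n. lam ! l * Re (C $$ (l,l)))"
      unfolding fact2 by (simp add: Re_sum mult.commute)
    ultimately show ?thesis unfolding fact1 by simp
  qed
  have "sum_list (take k (Sing (A * Z))) = (\<Sum>j<k. sqrt (mu ! j))"
    unfolding Sing_def X_def[symmetric] M_def[symmetric] EigM using kn lmu by (simp add: sum_list_take)
  moreover have "sum_list (take k (Eig (A * Z))) = (\<Sum>l<k. lam ! l)"
    unfolding X_def[symmetric] EigX using kn llam by (simp add: sum_list_take)
  ultimately show "sum_list (take k (Sing (A * Z))) \<le> (a + b) / (2 * sqrt (a * b)) * sum_list (take k (Eig (A * Z)))"
    using goal unfolding F_def by simp
qed

end
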